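(* Fix $\alpha\in\mathbb{D}\setminus\{0\}$, let $\psi(z)=\frac{\sqrt{1-|\alpha|^2}}{1-\bar\alpha z}$ and $\theta(z)=\frac{\bar\alpha}{\alpha}\frac{\alpha-z}{1-\bar\alpha z}$, let $W_{\psi,\theta}f=\psi\cdot(f\circ\theta)$ on $H^2(\mathbb{D})$, and let $C_{\psi,\theta}=W_{\psi,\theta}J_{H^2(\mathbb{D})}$, i.e. $(C_{\psi,\theta}f)(z)=\psi(z)\overline{f(\overline{\theta(z)})}$, which is a conjugation on $H^2(\mathbb{D})$. Let $\varphi=\sum_{n=-\infty}^\infty\varphi_nz^n\in L^\infty(\mathbb{T})$. Then $T_\varphi$ is $C_{\psi,\theta}$-symmetric if and only if \[ \varphi_{m-n}=\sum_{i,j=0}^\infty u_{m,j}\,\varphi_{i-j}\,\overline{u_{i,n}}\qquad(m,n\in\mathbb{Z}_+), \] where \[ u_{i,j}=\sqrt{1-|\alpha|^2}\sum_{m=0}^{\min\{i,j\}}\frac{(-1)^m}{\alpha^m}\binom{i}{m}\bar\alpha^{\,i+j-m}\binom{i+j-m}{i}\qquad(i,j\in\mathbb{Z}_+). \]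
   Context: A conjugation is an anti-linear, involutive, isometric map; $T$ is $C$-symmetric if $CT^*C=T$. $H^2(\mathbb{D})$ is the Hardy space of the disc with basis $\{z^n\}$; $J_{H^2(\mathbb{D})}(\sum a_nz^n)=\sum\bar a_nz^n$; $T_\varphi f=P_{H^2(\mathbb{D})}(\varphi f)$. (The numbers $u_{i,j}$ equal $\langle W_{\psi,\theta}z^i,z^j\rangle$.) *)

theory Defs
  imports "HOL-Analysis.Analysis"
begin

text \<open>The Hardy space H^2(D) is modelled via the orthonormal basis z^n:
  an element is its sequence of Taylor coefficients (square summable).\<close>

definition H2 :: "(nat \<Rightarrow> complex) set" where
  "H2 = {a. summable (\<lambda>n. (cmod (a n))\<^sup>2)}"

definition h2_inner :: "(nat \<Rightarrow> complex) \<Rightarrow> (nat \<Rightarrow> complex) \<Rightarrow> complex" where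
  "h2_inner a b = (\<Sum>n. a n * cnj (b n))"

definition h2_fun :: "(nat \<Rightarrow> complex) \<Rightarrow> complex \<Rightarrow> complex" where
  "h2_fun a z = (\<Sum>n. a n * z ^ n)"

definition taylor_coeffs :: "(complex \<Rightarrow> complex) \<Rightarrow> nat \<Rightarrow> complex" where
  "taylor_coeffs g n = (deriv ^^ n) g 0 / of_nat (fact n)"

definition J_H2 :: "(nat \<Rightarrow> complex) \<Rightarrow> nat \<Rightarrow> complex" where
  "J_H2 a = (\<lambda>n. cnj (a n))"

definition psi_fn :: "complex \<Rightarrow> complex \<Rightarrow> complex" where
  "psi_fn \<alpha> z = complex_of_real (sqrt (1 - (cmod \<alpha>)\<^sup>2)) / (1 - cnj \<alpha> * z)"

definition theta_fn :: "complex \<Rightarrow> complex \<Rightarrow> complex" where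
  "theta_fn \<alpha> z = (cnj \<alpha> / \<alpha>) * ((\<alpha> - z) / (1 - cnj \<alpha> * z))"

definition W_op :: "complex \<Rightarrow> (nat \<Rightarrow> complex) \<Rightarrow> nat \<Rightarrow> complex" where
  "W_op \<alpha> a = taylor_coeffs (\<lambda>z. psi_fn \<alpha> z * h2_fun a (theta_fn \<alpha> z))"

definition C_op :: "complex \<Rightarrow> (nat \<Rightarrow> complex) \<Rightarrow> nat \<Rightarrow> complex" where
  "C_op \<alpha> = W_op \<alpha> \<circ> J_H2"

definition is_adjoint :: "((nat \<Rightarrow> complex) \<Rightarrow> nat \<Rightarrow> complex) \<Rightarrow> ((nat \<Rightarrow> complex) \<Rightarrow> nat \<Rightarrow> complex) \<Rightarrow> bool" where
  "is_adjoint T S \<longleftrightarrow> (\<forall>g\<in>H2. S g \<in> H2) \<and>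
     (\<forall>f\<in>H2. \<forall>g\<in>H2. h2_inner (T f) g = h2_inner f (S g))"

definition C_symmetric :: "((nat \<Rightarrow> complex) \<Rightarrow> nat \<Rightarrow> complex) \<Rightarrow> ((nat \<Rightarrow> complex) \<Rightarrow> nat \<Rightarrow> complex) \<Rightarrow> bool" where
  "C_symmetric C T \<longleftrightarrow> (\<exists>S. is_adjoint T S \<and> (\<forall>f\<in>H2. C (S (C f)) = T f))"

definition L_infty_circle :: "(complex \<Rightarrow> complex) \<Rightarrow> bool" where
  "L_infty_circle \<phi> \<longleftrightarrow> (\<lambda>t. \<phi> (cis t)) \<in> borel_measurable lborel \<and>
     (\<exists>M. AE t in lborel. t \<in> {0..2*pi} \<longrightarrow> cmod (\<phi> (cis t)) \<le> M)"

definition fourier_coeff :: "(complex \<Rightarrow> complex) \<Rightarrow> int \<Rightarrow> complex" where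
  "fourier_coeff \<phi> n = (LINT t:{0..2*pi}|lborel. \<phi> (cis t) * cis (- (of_int n * t))) / (2 * pi)"

text \<open>Toeplitz operator T_phi f = P(phi f), written in the basis z^n:
  the m-th coefficient of P(phi f) is sum_k phi_(m-k) f_k.\<close>
definition toeplitz :: "(complex \<Rightarrow> complex) \<Rightarrow> (nat \<Rightarrow> complex) \<Rightarrow> nat \<Rightarrow> complex" where
  "toeplitz \<phi> a = (\<lambda>m. \<Sum>k. fourier_coeff \<phi> (int m - int k) * a k)"

definition u_coeff :: "complex \<Rightarrow> nat \<Rightarrow> nat \<Rightarrow> complex" where
  "u_coeff \<alpha> i j = complex_of_real (sqrt (1 - (cmod \<alpha>)\<^sup>2)) *
     (\<Sum>m = 0..min i j. ((-1) ^ m / \<alpha> ^ m) * of_nat (i choose m) *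
        cnj \<alpha> ^ (i + j - m) * of_nat ((i + j - m) choose i))"

end

theory Submission
  imports Defs
begin

lemma suminf_infsum_nat:
  fixes f :: "nat \<Rightarrow> 'a::banach"
  assumes "summable (\<lambda>n. norm (f n))"
  shows "infsum f UNIV = suminf f"
  using norm_summable_imp_has_sum[OF assms, of "suminf f"] assms
  by (metis infsumI summable_norm_cancel summable_sums)

lemma fubini_nat:
  fixes f :: "nat \<Rightarrow> nat \<Rightarrow> complex"
  assumes r: "\<And>i. summable (\<lambda>j. norm (f i j))"
    and s: "summable (\<lambda>i. \<Sum>j. norm (f i j))"
  shows "(\<Sum>i. \<Sum>j. f i j) = (\<Sum>j. \<Sum>i. f i j)"
    and "summable (\<lambda>i. norm (f i j))"
    and "summable (\<lambda>j. \<Sum>i. norm (f i j))"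
proof -
  have rs: "(\<lambda>j. norm (f i j)) summable_on UNIV" for i
    using r by (auto intro: norm_summable_imp_summable_on)
  have inf_r: "infsum (\<lambda>j. norm (f i j)) UNIV = (\<Sum>j. norm (f i j))" for i
    using suminf_infsum_nat[of "\<lambda>j. norm (f i j)"] r by simp
  have ss: "(\<lambda>i. norm (\<Sum>j. norm (f i j))) summable_on UNIV"
    by (rule norm_summable_imp_summable_on) (use s in \<open>simp add: suminf_nonneg[OF r]\<close>)
  have abs: "(\<lambda>p. norm ((\<lambda>(i,j). f i j) p)) summable_on (UNIV \<times> UNIV)"
  proof (rule iffD2[OF Infinite_Sum.abs_summable_on_Sigma_iff], intro conjI ballI)
    show "(\<lambda>j. norm ((\<lambda>(i,j). f i j) (i,j))) summable_on UNIV" for i using rs[of i] by simp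
    show "(\<lambda>i. norm (infsum (\<lambda>j. norm ((\<lambda>(i,j). f i j) (i,j))) UNIV)) summable_on UNIV"
      using ss by (simp add: inf_r)
  qed
  hence sum2: "(\<lambda>(i,j). f i j) summable_on (UNIV \<times> UNIV)"
    by (simp add: abs_summable_summable)
  have absT: "(\<lambda>p. norm ((\<lambda>(j,i). f i j) p)) summable_on (UNIV \<times> UNIV)"
  proof -
    have e: "prod.swap ` (UNIV \<times> UNIV) = (UNIV::(nat\<times>nat) set)" by auto
    have "((\<lambda>p. norm ((\<lambda>(i,j). f i j) p)) \<circ> prod.swap) summable_on (UNIV \<times> UNIV)"
      using summable_on_reindex[of prod.swap "UNIV \<times> UNIV" "\<lambda>p. norm ((\<lambda>(i,j). f i j) p)"] abs e
      by simp
    moreover have "((\<lambda>p. norm ((\<lambda>(i,j). f i j) p)) \<circ> prod.swap) = (\<lambda>p. norm ((\<lambda>(j,i). f i j) p))"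
      by auto
    ultimately show ?thesis by simp
  qed
  have c12: "(\<forall>j\<in>UNIV. (\<lambda>i. norm ((\<lambda>(j,i). f i j) (j,i))) summable_on UNIV) \<and> (\<lambda>j. norm (infsum (\<lambda>i. norm ((\<lambda>(j,i). f i j) (j,i))) UNIV)) summable_on UNIV"
    by (rule iffD1[OF _ absT]) (rule Infinite_Sum.abs_summable_on_Sigma_iff)
  have c1: "(\<lambda>i. norm (f i j)) summable_on UNIV" for j using c12 by simp
  have c2: "(\<lambda>j. norm (infsum (\<lambda>i. norm (f i j)) UNIV)) summable_on UNIV" using c12 by simp
  show cs: "summable (\<lambda>i. norm (f i j))" for j
    using c1 summable_on_imp_summable by blast
  have inf_c: "infsum (\<lambda>i. norm (f i j)) UNIV = (\<Sum>i. norm (f i j))" for j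
    using suminf_infsum_nat[of "\<lambda>i. norm (f i j)"] cs by simp
  show "summable (\<lambda>j. \<Sum>i. norm (f i j))"
  proof -
    have "summable (\<lambda>j. norm (\<Sum>i. norm (f i j)))"
      using c2 unfolding inf_c by (rule summable_on_imp_summable)
    moreover have "norm (\<Sum>i. norm (f i j)) = (\<Sum>i. norm (f i j))" for j
      using suminf_nonneg[OF cs[of j]] by simp
    ultimately show ?thesis by simp
  qed
  have "(\<Sum>i. \<Sum>j. f i j) = infsum (\<lambda>i. infsum (\<lambda>j. f i j) UNIV) UNIV"
  proof -
    have e: "infsum (\<lambda>j. f i j) UNIV = (\<Sum>j. f i j)" for i by (rule suminf_infsum_nat[OF r])
    have "summable (\<lambda>i. norm (\<Sum>j. f i j))"
      by (rule summable_comparison_test[OF _ s]) (use summable_norm[OF r] in force)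
    have "infsum (\<lambda>i. \<Sum>j. f i j) UNIV = (\<Sum>i. \<Sum>j. f i j)" by (rule suminf_infsum_nat) fact
    moreover have "(\<lambda>i. infsum (\<lambda>j. f i j) UNIV) = (\<lambda>i. \<Sum>j. f i j)" by (rule ext) (rule e)
    ultimately show ?thesis by (simp only:)
  qed
  also have "\<dots> = infsum (\<lambda>j. infsum (\<lambda>i. f i j) UNIV) UNIV"
    by (rule infsum_swap_banach[OF sum2])
  also have "\<dots> = (\<Sum>j. \<Sum>i. f i j)"
  proof -
    have e: "infsum (\<lambda>i. f i j) UNIV = (\<Sum>i. f i j)" for j by (rule suminf_infsum_nat[OF cs])
    have "summable (\<lambda>j. norm (\<Sum>i. f i j))"
      by (rule summable_comparison_test[OF _ \<open>summable (\<lambda>j. \<Sum>i. norm (f i j))\<close>]) (use summable_norm[OF cs] in force)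
    have "infsum (\<lambda>j. \<Sum>i. f i j) UNIV = (\<Sum>j. \<Sum>i. f i j)" by (rule suminf_infsum_nat) fact
    moreover have "(\<lambda>j. infsum (\<lambda>i. f i j) UNIV) = (\<lambda>j. \<Sum>i. f i j)" by (rule ext) (rule e)
    ultimately show ?thesis by (simp only:)
  qed
  finally show "(\<Sum>i. \<Sum>j. f i j) = (\<Sum>j. \<Sum>i. f i j)" .
qed

lemma hockey: "(\<Sum>k\<le>l. (i + k) choose i) = Suc (i + l) choose Suc i"
  by (induct l) auto

lemma neg_binom_sums:
  fixes w :: complex
  assumes "norm w < 1"
  shows "(\<lambda>l. of_nat ((i + l) choose i) * w ^ l) sums (1 / (1 - w) ^ Suc i)"
  using assms
proof (induct i arbitrary: w)
  case (0 w)
  show ?case using geometric_sums[of w] "0.prems" by simp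
next
  case (Suc i w)
  have a: "summable (\<lambda>l. norm (of_nat ((i + l) choose i) * w ^ l))"
  proof -
    have "(\<lambda>l. of_nat ((i + l) choose i) * (complex_of_real (norm w)) ^ l) sums (1 / (1 - of_real (norm w)) ^ Suc i)"
      by (rule Suc.hyps) (use Suc.prems in simp)
    hence "summable (\<lambda>l. complex_of_real (of_nat ((i + l) choose i) * norm w ^ l))"
      by (simp add: sums_iff)
    hence "summable (\<lambda>l. of_nat ((i + l) choose i) * norm w ^ l)"
      by (simp only: summable_complex_of_real)
    thus ?thesis by (simp add: norm_mult norm_power)
  qed
  have b: "summable (\<lambda>l. norm (w ^ l))"
    using Suc.prems by (simp add: norm_power summable_geometric)
  have "(\<lambda>l. \<Sum>k\<le>l. of_nat ((i + k) choose i) * w ^ k * w ^ (l - k)) sums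
        ((\<Sum>l. of_nat ((i + l) choose i) * w ^ l) * (\<Sum>l. w ^ l))"
    by (rule Cauchy_product_sums[OF a b])
  moreover have "(\<Sum>k\<le>l. of_nat ((i + k) choose i) * w ^ k * w ^ (l - k)) = of_nat ((Suc i + l) choose Suc i) * w ^ l" for l
  proof -
    have "(\<Sum>k\<le>l. of_nat ((i + k) choose i) * w ^ k * w ^ (l - k)) = (\<Sum>k\<le>l. of_nat ((i + k) choose i) * w ^ l)"
      by (intro sum.cong refl) (simp add: mult.assoc power_add[symmetric])
    also have "\<dots> = of_nat (\<Sum>k\<le>l. (i + k) choose i) * w ^ l"
      by (simp add: sum_distrib_right)
    finally show ?thesis by (simp add: hockey)
  qed
  moreover have "(\<Sum>l. of_nat ((i + l) choose i) * w ^ l) = 1 / (1 - w) ^ Suc i"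
    using Suc.hyps[OF Suc.prems] sums_unique by metis
  moreover have "(\<Sum>l. w ^ l) = 1 / (1 - w)"
    using sums_unique[OF geometric_sums[OF Suc.prems]] by simp
  ultimately show ?case by (simp add: field_simps)
qed

definition pr_coeff :: "complex \<Rightarrow> complex \<Rightarrow> complex \<Rightarrow> nat \<Rightarrow> nat \<Rightarrow> complex" where
  "pr_coeff \<beta> \<gamma> \<delta> i j = (\<Sum>m=0..min i j. of_nat (i choose m) * \<beta>^(i-m) * \<gamma>^m *
      of_nat ((i+j-m) choose i) * \<delta>^(j-m))"

lemma neg_binom_norm_summable:
  fixes w :: complex
  assumes "norm w < 1"
  shows "summable (\<lambda>l. norm (of_nat ((i + l) choose i) * w ^ l))"
proof -
  have "(\<lambda>l. of_nat ((i + l) choose i) * (complex_of_real (norm w)) ^ l) sums (1 / (1 - of_real (norm w)) ^ Suc i)"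
    by (rule neg_binom_sums) (use assms in simp)
  hence "summable (\<lambda>l. complex_of_real (of_nat ((i + l) choose i) * norm w ^ l))"
    by (simp add: sums_iff)
  hence "summable (\<lambda>l. of_nat ((i + l) choose i) * norm w ^ l)"
    by (simp only: summable_complex_of_real)
  thus ?thesis by (simp add: norm_mult norm_power)
qed

lemma pr_sums:
  fixes \<beta> \<gamma> \<delta> z :: complex
  assumes "norm (\<delta> * z) < 1"
  shows "(\<lambda>j. pr_coeff \<beta> \<gamma> \<delta> i j * z^j) sums ((\<beta> + \<gamma>*z)^i / (1 - \<delta>*z)^Suc i)"
proof -
  define a where "a m = (if m \<le> i then of_nat (i choose m) * (\<gamma>*z)^m * \<beta>^(i-m) else 0)" for m
  define b where "b l = of_nat ((i + l) choose i) * (\<delta>*z)^l" for l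
  have as: "a sums (\<Sum>m\<in>{..i}. a m)"
    by (rule sums_finite) (auto simp: a_def)
  have an: "summable (\<lambda>m. norm (a m))"
    by (rule sums_summable[OF sums_finite[of "{..i}"]]) (auto simp: a_def)
  have "(\<Sum>m\<in>{..i}. a m) = (\<gamma>*z + \<beta>)^i"
    by (simp add: a_def binomial_ring)
  hence sa: "suminf a = (\<beta> + \<gamma>*z)^i" using as sums_unique by (metis add.commute)
  have bs: "b sums (1 / (1 - \<delta>*z)^Suc i)"
    unfolding b_def by (rule neg_binom_sums[OF assms])
  have bn: "summable (\<lambda>l. norm (b l))"
    unfolding b_def by (rule neg_binom_norm_summable[OF assms])
  have "(\<lambda>j. \<Sum>m\<le>j. a m * b (j - m)) sums (suminf a * suminf b)"
    by (rule Cauchy_product_sums[OF an bn])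
  moreover have "(\<Sum>m\<le>j. a m * b (j - m)) = pr_coeff \<beta> \<gamma> \<delta> i j * z^j" for j
  proof -
    have "(\<Sum>m\<le>j. a m * b (j - m)) = (\<Sum>m=0..min i j. a m * b (j - m))"
      by (rule sum.mono_neutral_cong_right) (auto simp: a_def)
    also have "\<dots> = (\<Sum>m=0..min i j. of_nat (i choose m) * \<beta>^(i-m) * \<gamma>^m *
      of_nat ((i+j-m) choose i) * \<delta>^(j-m) * z^j)"
    proof (intro sum.cong refl)
      fix m assume "m \<in> {0..min i j}"
      hence m: "m \<le> i" "m \<le> j" by auto
      have zz: "z^m * z^(j-m) = z^j" using m by (simp add: power_add[symmetric])
      have ii: "i + (j - m) = i + j - m" using m by simp
      show "a m * b (j - m) = of_nat (i choose m) * \<beta>^(i-m) * \<gamma>^m *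
        of_nat ((i+j-m) choose i) * \<delta>^(j-m) * z^j"
        using m unfolding a_def b_def ii by (simp add: power_mult_distrib zz[symmetric] algebra_simps)
    qed
    finally show ?thesis by (simp add: pr_coeff_def sum_distrib_right)
  qed
  ultimately show ?thesis using sa sums_unique[OF bs] by (simp add: divide_inverse)
qed

abbreviation sc :: "complex \<Rightarrow> real" where
  "sc \<alpha> \<equiv> sqrt (1 - (cmod \<alpha>)\<^sup>2)"

lemma u_pr:
  assumes "\<alpha> \<noteq> 0"
  shows "u_coeff \<alpha> i j = of_real (sc \<alpha>) * (cnj \<alpha> / \<alpha>)^i * pr_coeff \<alpha> (-1) (cnj \<alpha>) i j"
proof -
  have "((-1) ^ m / \<alpha> ^ m) * of_nat (i choose m) * cnj \<alpha> ^ (i + j - m) * of_nat ((i + j - m) choose i)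
     = (cnj \<alpha> / \<alpha>)^i * (of_nat (i choose m) * \<alpha>^(i-m) * (-1)^m * of_nat ((i+j-m) choose i) * cnj \<alpha>^(j-m))"
    if "m \<in> {0..min i j}" for m
  proof -
    from that have m: "m \<le> i" "m \<le> j" by auto
    have e1: "cnj \<alpha> ^ (i + j - m) = cnj \<alpha> ^ i * cnj \<alpha> ^ (j - m)"
      using m by (simp add: power_add[symmetric])
    have e2: "\<alpha> ^ i = \<alpha> ^ m * \<alpha> ^ (i - m)"
      using m by (simp add: power_add[symmetric])
    show ?thesis using assms unfolding e1 power_divide e2 by (simp add: field_simps)
  qed
  thus ?thesis unfolding u_coeff_def pr_coeff_def
    by (simp add: sum_distrib_left mult.assoc)
qed

lemma norm_cnj_div [simp]: "\<alpha> \<noteq> 0 \<Longrightarrow> norm (cnj \<alpha> / \<alpha>) = 1"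
  by (simp add: norm_divide)

lemma u_sums:
  assumes "\<alpha> \<noteq> 0" "norm (cnj \<alpha> * z) < 1"
  shows "(\<lambda>j. u_coeff \<alpha> i j * z^j) sums (psi_fn \<alpha> z * theta_fn \<alpha> z ^ i)"
proof -
  have "(\<lambda>j. pr_coeff \<alpha> (-1) (cnj \<alpha>) i j * z^j) sums ((\<alpha> + (-1)*z)^i / (1 - cnj \<alpha>*z)^Suc i)"
    by (rule pr_sums[OF assms(2)])
  hence "(\<lambda>j. (of_real (sc \<alpha>) * (cnj \<alpha> / \<alpha>)^i) * (pr_coeff \<alpha> (-1) (cnj \<alpha>) i j * z^j)) sums
     ((of_real (sc \<alpha>) * (cnj \<alpha> / \<alpha>)^i) * ((\<alpha> + (-1)*z)^i / (1 - cnj \<alpha>*z)^Suc i))"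
    by (rule sums_mult)
  moreover have "1 - cnj \<alpha> * z \<noteq> 0"
    using assms(2) by auto
  moreover have "psi_fn \<alpha> z * theta_fn \<alpha> z ^ i =
     (of_real (sc \<alpha>) * (cnj \<alpha> / \<alpha>)^i) * ((\<alpha> + (-1)*z)^i / (1 - cnj \<alpha>*z)^Suc i)"
    unfolding psi_fn_def theta_fn_def power_mult_distrib power_divide
    by (simp add: field_simps)
  ultimately show ?thesis
    unfolding u_pr[OF assms(1)] by (simp add: mult.assoc)
qed

definition pm :: "real \<Rightarrow> nat \<Rightarrow> nat \<Rightarrow> real" where
  "pm a i j = (\<Sum>m=0..min i j. real (i choose m) * a^(i-m) * real ((i+j-m) choose i) * a^(j-m))"

lemma pm_nonneg: "a \<ge> 0 \<Longrightarrow> pm a i j \<ge> 0"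
  unfolding pm_def by (intro sum_nonneg) auto

lemma pm_sums:
  assumes "0 \<le> r" "0 \<le> a" "a * r < 1"
  shows "(\<lambda>j. pm a i j * r^j) sums ((a + r)^i / (1 - a*r)^Suc i)"
proof -
  have "(\<lambda>j. pr_coeff (of_real a) 1 (of_real a) i j * (of_real r)^j) sums
      ((of_real a + 1 * of_real r)^i / (1 - of_real a * of_real r)^Suc i)"
    by (rule pr_sums) (use assms in \<open>simp add: norm_mult\<close>)
  moreover have "pr_coeff (of_real a) 1 (of_real a) i j = of_real (pm a i j)" for j
    unfolding pr_coeff_def pm_def by simp
  ultimately have "(\<lambda>j. complex_of_real (pm a i j * r^j)) sums of_real ((a + r)^i / (1 - a*r)^Suc i)"
    by simp
  thus ?thesis by (simp only: sums_of_real_iff)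
qed

lemma u_norm_le:
  assumes "\<alpha> \<noteq> 0" "norm \<alpha> < 1"
  shows "norm (u_coeff \<alpha> i j) \<le> sc \<alpha> * pm (norm \<alpha>) i j"
proof -
  have "norm (pr_coeff \<alpha> (-1) (cnj \<alpha>) i j) \<le> pm (norm \<alpha>) i j"
    unfolding pr_coeff_def pm_def
    by (rule order_trans[OF norm_sum]) (simp add: norm_mult norm_power)
  moreover have "sc \<alpha> \<ge> 0" using assms(2) by (simp add: abs_square_le_1 power_le_one)
  ultimately show ?thesis unfolding u_pr[OF assms(1)] using assms
    by (simp add: norm_mult norm_power mult_left_mono)
qed

lemma u_row:
  assumes "\<alpha> \<noteq> 0" "norm \<alpha> < 1" "0 \<le> r" "norm \<alpha> * r < 1"
  shows "summable (\<lambda>j. norm (u_coeff \<alpha> i j) * r^j)"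
    and "(\<Sum>j. norm (u_coeff \<alpha> i j) * r^j) \<le> sc \<alpha> * ((norm \<alpha> + r)^i / (1 - norm \<alpha> * r)^Suc i)"
proof -
  have ps: "(\<lambda>j. sc \<alpha> * (pm (norm \<alpha>) i j * r^j)) sums (sc \<alpha> * ((norm \<alpha> + r)^i / (1 - norm \<alpha>*r)^Suc i))"
    by (rule sums_mult[OF pm_sums]) (use assms in auto)
  have le: "norm (u_coeff \<alpha> i j) * r^j \<le> sc \<alpha> * (pm (norm \<alpha>) i j * r^j)" for j
    using u_norm_le[OF assms(1,2), of i j] assms(3) by (simp add: mult_right_mono mult.assoc[symmetric])
  show sm: "summable (\<lambda>j. norm (u_coeff \<alpha> i j) * r^j)"
    by (rule summable_comparison_test[OF _ sums_summable[OF ps]]) (use le assms(3) in auto)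
  show "(\<Sum>j. norm (u_coeff \<alpha> i j) * r^j) \<le> sc \<alpha> * ((norm \<alpha> + r)^i / (1 - norm \<alpha> * r)^Suc i)"
    using suminf_le[OF le sm sums_summable[OF ps]] sums_unique[OF ps] by simp
qed

lemma choose_sym_aux:
  assumes "m \<le> i" "m \<le> j"
  shows "(i choose m) * ((i + j - m) choose i) = (j choose m) * ((i + j - m) choose j)"
proof -
  have A: "(i choose m) * ((i + j - m) choose i) * (fact m * fact (i - m) * fact (j - m)) = (fact (i + j - m) :: nat)"
  proof -
    have "fact m * fact (i - m) * (i choose m) = (fact i :: nat)" using binomial_fact_lemma[OF assms(1)] .
    moreover have "fact i * fact (i + j - m - i) * ((i + j - m) choose i) = (fact (i + j - m) :: nat)"
      using binomial_fact_lemma[of i "i + j - m"] assms by simp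
    moreover have "i + j - m - i = j - m" using assms by simp
    ultimately show ?thesis by (metis mult.commute mult.left_commute)
  qed
  have B: "(j choose m) * ((i + j - m) choose j) * (fact m * fact (j - m) * fact (i - m)) = (fact (i + j - m) :: nat)"
  proof -
    have "fact m * fact (j - m) * (j choose m) = (fact j :: nat)" using binomial_fact_lemma[OF assms(2)] .
    moreover have "fact j * fact (i + j - m - j) * ((i + j - m) choose j) = (fact (i + j - m) :: nat)"
      using binomial_fact_lemma[of j "i + j - m"] assms by simp
    moreover have "i + j - m - j = i - m" using assms by simp
    ultimately show ?thesis by (metis mult.commute mult.left_commute)
  qed
  have P: "(fact m * fact (i - m) * fact (j - m) :: nat) > 0" by simp
  from A B have "(i choose m) * ((i + j - m) choose i) * (fact m * fact (i - m) * fact (j - m)) =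
     (j choose m) * ((i + j - m) choose j) * (fact m * fact (i - m) * fact (j - m))"
    by (simp add: mult.commute mult.left_commute)
  with P show ?thesis by simp
qed

lemma u_sym: "u_coeff \<alpha> i j = u_coeff \<alpha> j i"
proof -
  have "((-1) ^ m / \<alpha> ^ m) * of_nat (i choose m) * cnj \<alpha> ^ (i + j - m) * of_nat ((i + j - m) choose i) =
        ((-1) ^ m / \<alpha> ^ m) * of_nat (j choose m) * cnj \<alpha> ^ (j + i - m) * of_nat ((j + i - m) choose j)"
    if "m \<in> {0..min i j}" for m
  proof -
    from that have m: "m \<le> i" "m \<le> j" by auto
    have "of_nat (i choose m) * of_nat ((i + j - m) choose i) = (of_nat (j choose m) * of_nat ((i + j - m) choose j) :: complex)"
      using choose_sym_aux[OF m] by (metis of_nat_mult)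
    thus ?thesis by (simp add: add.commute mult_ac)
  qed
  hence "(\<Sum>m = 0..min i j. ((-1) ^ m / \<alpha> ^ m) * of_nat (i choose m) * cnj \<alpha> ^ (i + j - m) * of_nat ((i + j - m) choose i)) =
        (\<Sum>m = 0..min j i. ((-1) ^ m / \<alpha> ^ m) * of_nat (j choose m) * cnj \<alpha> ^ (j + i - m) * of_nat ((j + i - m) choose j))"
    unfolding min.commute[of j i] by (rule sum.cong[OF refl])
  thus ?thesis unfolding u_coeff_def by (simp only:)
qed

definition rr :: "complex \<Rightarrow> real" where "rr \<alpha> = (1 - norm \<alpha>) / 4"
definition qq :: "complex \<Rightarrow> real" where "qq \<alpha> = (norm \<alpha> + rr \<alpha>) / (1 - norm \<alpha> * rr \<alpha>)"

lemma rr_props: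
  assumes "norm \<alpha> < 1"
  shows "rr \<alpha> > 0" "norm \<alpha> * rr \<alpha> < 1" "qq \<alpha> < 1" "qq \<alpha> \<ge> 0" "1 - norm \<alpha> * rr \<alpha> > 0"
proof -
  have n0: "norm \<alpha> \<ge> 0" by simp
  show "rr \<alpha> > 0" using assms by (simp add: rr_def)
  have "norm \<alpha> * rr \<alpha> \<le> 1 * rr \<alpha>" using assms n0 \<open>rr \<alpha> > 0\<close> by (intro mult_right_mono) auto
  moreover have "rr \<alpha> < 1"
  proof -
    have "1 - norm \<alpha> < 4" using n0 by linarith
    thus ?thesis unfolding rr_def by simp
  qed
  ultimately show "norm \<alpha> * rr \<alpha> < 1" "1 - norm \<alpha> * rr \<alpha> > 0" by auto
  have "norm \<alpha> + rr \<alpha> < 1 - norm \<alpha> * rr \<alpha>"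
  proof -
    have p: "1 - norm \<alpha> > 0" using assms by simp
    have q: "(1 + norm \<alpha>) / 4 < 1" using assms by simp
    have "rr \<alpha> * (1 + norm \<alpha>) = (1 - norm \<alpha>) * ((1 + norm \<alpha>) / 4)" by (simp add: rr_def)
    also have "\<dots> < (1 - norm \<alpha>) * 1" by (rule mult_strict_left_mono[OF q p])
    finally have "rr \<alpha> * (1 + norm \<alpha>) < 1 - norm \<alpha>" by simp
    thus ?thesis by (simp add: algebra_simps)
  qed
  thus "qq \<alpha> < 1" using \<open>1 - norm \<alpha> * rr \<alpha> > 0\<close> by (simp add: qq_def)
  show "qq \<alpha> \<ge> 0" using \<open>1 - norm \<alpha> * rr \<alpha> > 0\<close> \<open>rr \<alpha> > 0\<close> by (simp add: qq_def)
qed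

lemma theta_small:
  assumes "norm \<alpha> < 1" "\<alpha> \<noteq> 0" "norm z \<le> rr \<alpha>"
  shows "norm (theta_fn \<alpha> z) \<le> qq \<alpha>"
proof -
  note R = rr_props[OF assms(1)]
  have "norm (cnj \<alpha> * z) \<le> norm \<alpha> * rr \<alpha>" using assms(3) by (simp add: norm_mult mult_left_mono)
  hence d: "norm (1 - cnj \<alpha> * z) \<ge> 1 - norm \<alpha> * rr \<alpha>"
    by (smt (verit) norm_triangle_ineq2 norm_one)
  have n: "norm (\<alpha> - z) \<le> norm \<alpha> + rr \<alpha>" using assms(3) norm_triangle_ineq4[of \<alpha> z] by simp
  have "norm (theta_fn \<alpha> z) = norm (\<alpha> - z) / norm (1 - cnj \<alpha> * z)"
    using assms(2) by (simp add: theta_fn_def norm_mult norm_divide)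
  also have "\<dots> \<le> (norm \<alpha> + rr \<alpha>) / (1 - norm \<alpha> * rr \<alpha>)"
    by (rule frac_le) (use n d R in auto)
  finally show ?thesis by (simp add: qq_def)
qed

lemma u_row1:
  assumes "norm \<alpha> < 1" "\<alpha> \<noteq> 0"
  shows "summable (\<lambda>j. norm (u_coeff \<alpha> i j))"
  using u_row(1)[OF assms(2,1), of 1 i] assms by simp

lemma u_col1:
  assumes "norm \<alpha> < 1" "\<alpha> \<noteq> 0"
  shows "summable (\<lambda>i. norm (u_coeff \<alpha> i j))"
  using u_row1[OF assms, of j] by (simp add: u_sym[of \<alpha> _ j])

lemma W_series:
  fixes h :: "nat \<Rightarrow> complex"
  assumes a: "norm \<alpha> < 1" "\<alpha> \<noteq> 0" and hB: "\<And>i. norm (h i) \<le> B" and z: "norm z \<le> rr \<alpha>"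
  shows "(\<Sum>j. (\<Sum>i. h i * u_coeff \<alpha> i j) * z^j) = psi_fn \<alpha> z * h2_fun h (theta_fn \<alpha> z)"
    and "summable (\<lambda>j. norm ((\<Sum>i. h i * u_coeff \<alpha> i j) * z^j))"
proof -
  note R = rr_props[OF a(1)]
  define r where "r = rr \<alpha>"
  define f where "f i j = h i * (u_coeff \<alpha> i j * z^j)" for i j
  have B0: "B \<ge> 0" using hB[of 0] norm_ge_zero[of "h 0"] by linarith
  have zr: "norm z \<le> r" using z by (simp add: r_def)
  have az: "norm (cnj \<alpha> * z) < 1"
    using R zr by (simp add: norm_mult r_def) (smt (verit) mult_left_mono norm_ge_zero)
  have fle: "norm (f i j) \<le> B * (norm (u_coeff \<alpha> i j) * r^j)" for i j
  proof -
    have "norm (f i j) = norm (h i) * (norm (u_coeff \<alpha> i j) * norm z ^ j)"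
      by (simp add: f_def norm_mult norm_power)
    also have "\<dots> \<le> B * (norm (u_coeff \<alpha> i j) * r ^ j)"
      by (intro mult_mono hB mult_left_mono power_mono zr) (auto simp: B0)
    finally show ?thesis .
  qed
  have ur: "summable (\<lambda>j. norm (u_coeff \<alpha> i j) * r^j)" for i
    by (rule u_row(1)) (use a R in \<open>auto simp: r_def\<close>)
  have row: "summable (\<lambda>j. norm (f i j))" for i
    by (rule summable_comparison_test[OF _ summable_mult[OF ur, of B]]) (use fle in auto)
  define K where "K = B * (sc \<alpha> / (1 - norm \<alpha> * r))"
  have rowsum: "(\<Sum>j. norm (f i j)) \<le> K * qq \<alpha> ^ i" for i
  proof -
    have "(\<Sum>j. norm (f i j)) \<le> (\<Sum>j. B * (norm (u_coeff \<alpha> i j) * r^j))"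
      by (rule suminf_le[OF fle row summable_mult[OF ur]])
    also have "\<dots> = B * (\<Sum>j. norm (u_coeff \<alpha> i j) * r^j)"
      by (rule suminf_mult[OF ur])
    also have "\<dots> \<le> B * (sc \<alpha> * ((norm \<alpha> + r)^i / (1 - norm \<alpha> * r)^Suc i))"
      by (rule mult_left_mono[OF u_row(2) B0]) (use a R in \<open>auto simp: r_def\<close>)
    also have "\<dots> = K * qq \<alpha> ^ i"
      by (simp add: K_def qq_def r_def power_divide field_simps)
    finally show ?thesis .
  qed
  have colsum: "summable (\<lambda>i. \<Sum>j. norm (f i j))"
  proof (rule summable_comparison_test[OF _ summable_mult[OF summable_geometric[of "qq \<alpha>"], of K]])
    show "norm (qq \<alpha>) < 1" using R by simp
    show "\<exists>N. \<forall>n\<ge>N. norm (\<Sum>j. norm (f n j)) \<le> K * qq \<alpha> ^ n"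
      using rowsum suminf_nonneg[OF row] by (intro exI[of _ 0]) auto
  qed
  note F = fubini_nat[of f, OF row colsum]
  have th: "norm (theta_fn \<alpha> z) \<le> qq \<alpha>" by (rule theta_small[OF a z])
  have hs: "summable (\<lambda>i. norm (h i * theta_fn \<alpha> z ^ i))"
  proof (rule summable_comparison_test[OF _ summable_mult[OF summable_geometric[of "qq \<alpha>"], of B]])
    show "norm (qq \<alpha>) < 1" using R by simp
    show "\<exists>N. \<forall>n\<ge>N. norm (norm (h n * theta_fn \<alpha> z ^ n)) \<le> B * qq \<alpha> ^ n"
      by (intro exI[of _ 0] allI impI)
        (simp add: norm_mult norm_power, intro mult_mono hB power_mono th, auto simp: B0)
  qed
  have fij: "(\<Sum>i. f i j) = (\<Sum>i. h i * u_coeff \<alpha> i j) * z^j" for j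
    proof -
      have "summable (\<lambda>i. h i * u_coeff \<alpha> i j)" 
        by (rule summable_norm_cancel, rule summable_comparison_test[OF _ summable_mult[OF u_col1[OF a, of j], of B]])
          (auto simp: norm_mult intro!: mult_right_mono hB)
      thus ?thesis unfolding f_def using suminf_mult2[of "\<lambda>i. h i * u_coeff \<alpha> i j" "z^j"] by (simp add: mult.assoc)
    qed
  have "psi_fn \<alpha> z * h2_fun h (theta_fn \<alpha> z) = (\<Sum>i. psi_fn \<alpha> z * (h i * theta_fn \<alpha> z ^ i))"
    unfolding h2_fun_def by (rule suminf_mult[symmetric, OF summable_norm_cancel[OF hs]])
  also have "\<dots> = (\<Sum>i. \<Sum>j. f i j)"
  proof -
    have "(\<Sum>j. f i j) = psi_fn \<alpha> z * (h i * theta_fn \<alpha> z ^ i)" for i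
      unfolding f_def using suminf_mult[OF sums_summable[OF u_sums[OF a(2) az, of i]], of "h i"]
        sums_unique[OF u_sums[OF a(2) az, of i]] by (simp add: mult_ac)
    thus ?thesis by simp
  qed
  also have "\<dots> = (\<Sum>j. \<Sum>i. f i j)" by (rule F(1))
  also have "\<dots> = (\<Sum>j. (\<Sum>i. h i * u_coeff \<alpha> i j) * z^j)"
    using fij by simp
  finally show "(\<Sum>j. (\<Sum>i. h i * u_coeff \<alpha> i j) * z^j) = psi_fn \<alpha> z * h2_fun h (theta_fn \<alpha> z)" ..
  show "summable (\<lambda>j. norm ((\<Sum>i. h i * u_coeff \<alpha> i j) * z^j))"
  proof (rule summable_comparison_test[OF _ F(3)])
    show "\<exists>N. \<forall>n\<ge>N. norm (norm ((\<Sum>i. h i * u_coeff \<alpha> i n) * z ^ n)) \<le> (\<Sum>i. norm (f i n))"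
      using summable_norm[OF F(2)] fij by (intro exI[of _ 0]) (auto simp del: norm_mult)
  qed
qed


lemma W_formula:
  fixes h :: "nat \<Rightarrow> complex"
  assumes a: "norm \<alpha> < 1" "\<alpha> \<noteq> 0" and hB: "\<And>i. norm (h i) \<le> B"
  shows "W_op \<alpha> h = (\<lambda>j. \<Sum>i. h i * u_coeff \<alpha> i j)"
proof
  fix n
  define F where "F = Abs_fps (\<lambda>j. \<Sum>i. h i * u_coeff \<alpha> i j)"
  define g where "g = (\<lambda>z. psi_fn \<alpha> z * h2_fun h (theta_fn \<alpha> z))"
  note R = rr_props[OF a(1)]
  have "g has_fps_expansion F"
    unfolding has_fps_expansion_def
  proof
    have "summable (\<lambda>j. norm ((\<Sum>i. h i * u_coeff \<alpha> i j) * (complex_of_real (rr \<alpha>))^j))"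
      by (rule W_series(2)[OF a hB]) (use R in simp)
    hence "summable (\<lambda>j. fps_nth F j * (complex_of_real (rr \<alpha>))^j)"
      unfolding F_def by (simp add: summable_norm_cancel)
    hence "conv_radius (fps_nth F) \<ge> norm (complex_of_real (rr \<alpha>))"
      by (rule conv_radius_geI)
    thus "0 < fps_conv_radius F" using R unfolding fps_conv_radius_def
      by (smt (verit) ereal_less(2) le_less_trans norm_of_real order_less_le_trans abs_of_pos less_ereal.simps(1))
    have "eventually (\<lambda>z. z \<in> ball 0 (rr \<alpha>)) (nhds 0)"
      using R by (intro eventually_nhds_in_open) auto
    thus "\<forall>\<^sub>F z in nhds 0. eval_fps F z = g z"
    proof (rule eventually_mono)
      fix z :: complex assume "z \<in> ball 0 (rr \<alpha>)"
      hence "norm z \<le> rr \<alpha>" by simp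
      thus "eval_fps F z = g z"
        unfolding eval_fps_def F_def g_def using W_series(1)[OF a hB] by simp
    qed
  qed
  hence "fps_nth F n = (deriv ^^ n) g 0 / fact n" by (rule fps_nth_fps_expansion)
  thus "W_op \<alpha> h n = (\<Sum>i. h i * u_coeff \<alpha> i n)"
    unfolding W_op_def taylor_coeffs_def g_def F_def by simp
qed

lemma cis_integral:
  fixes n :: int
  shows "(LINT t:{0..2*pi}|lborel. cis (of_int n * t)) = (if n = 0 then 2*pi else 0)"
proof -
  have ci: "set_integrable lborel {0..2*pi} (\<lambda>t. cis (of_int n * t))"
    by (rule borel_integrable_atLeastAtMost') (intro continuous_intros)
  have eq: "(LINT t:{0..2*pi}|lborel. cis (of_int n * t)) = integral {0..2*pi} (\<lambda>t. cis (of_int n * t))"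
    by (rule set_borel_integral_eq_integral(2)[OF ci])
  show ?thesis
  proof (cases "n = 0")
    case True
    have "(LINT t:{0..2*pi}|lborel. cis (of_int n * t)) = (LINT t:{0..2*pi}|lborel. (1::complex))"
      using True by simp
    also have "\<dots> = 2 * pi"
      by (subst set_integral_const) (auto simp: scaleR_conv_of_real)
    finally show ?thesis using True by simp
  next
    case False
    define c where "c = (real_of_int n)"
    have c0: "c \<noteq> 0" using False by (simp add: c_def)
    have der: "((\<lambda>t. cis (c * t) / (\<i> * of_real c)) has_vector_derivative cis (c * t)) (at t within {0..2*pi})" for t
    proof -
      have "((\<lambda>t. cis (c * t)) has_derivative (\<lambda>h. (c * h) *\<^sub>R (\<i> * cis (c * t)))) (at t within {0..2*pi})"
        by (rule has_derivative_cis) (auto intro!: derivative_eq_intros)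
      hence "((\<lambda>t. cis (c * t) / (\<i> * of_real c)) has_derivative
          (\<lambda>h. ((c * h) *\<^sub>R (\<i> * cis (c * t))) / (\<i> * of_real c))) (at t within {0..2*pi})"
        by (intro derivative_eq_intros) (use c0 in auto)
      moreover have "(\<lambda>h. ((c * h) *\<^sub>R (\<i> * cis (c * t))) / (\<i> * of_real c)) = (\<lambda>h. h *\<^sub>R cis (c * t))"
        using c0 by (auto simp: scaleR_conv_of_real field_simps)
      ultimately show ?thesis unfolding has_vector_derivative_def by simp
    qed
    have "((\<lambda>t. cis (c * t)) has_integral (cis (c * (2*pi)) / (\<i> * of_real c) - cis (c * 0) / (\<i> * of_real c))) {0..2*pi}"
      by (rule fundamental_theorem_of_calculus) (use der in auto)
    moreover have "cis (c * (2*pi)) = 1"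
    proof -
      have "cis (c * (2*pi)) = cis (2 * pi * of_int n)" by (simp add: c_def mult_ac)
      thus ?thesis by simp
    qed
    ultimately have "((\<lambda>t. cis (c * t)) has_integral 0) {0..2*pi}" by simp
    thus ?thesis using eq False by (simp add: c_def integral_unique)
  qed
qed

lemma cis_nat_integral:
  fixes j k :: nat
  shows "(LINT t:{0..2*pi}|lborel. cis (real j * t) * cnj (cis (real k * t))) = (if j = k then 2*pi else 0)"
proof -
  have "cis (real j * t) * cnj (cis (real k * t)) = cis (of_int (int j - int k) * t)" for t
    by (simp add: cis_mult cis_cnj algebra_simps)
  hence "(LINT t:{0..2*pi}|lborel. cis (real j * t) * cnj (cis (real k * t))) =
     (LINT t:{0..2*pi}|lborel. cis (of_int (int j - int k) * t))" by simp
  also have "\<dots> = (if j = k then 2*pi else 0)"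
    by (subst cis_integral) auto
  finally show ?thesis .
qed

lemma set_integral_sum_fin:
  fixes f :: "'i \<Rightarrow> real \<Rightarrow> complex"
  assumes "finite S" "\<And>i. i \<in> S \<Longrightarrow> set_integrable lborel A (f i)"
  shows "(LINT t:A|lborel. (\<Sum>i\<in>S. f i t)) = (\<Sum>i\<in>S. LINT t:A|lborel. f i t)"
    and "set_integrable lborel A (\<lambda>t. \<Sum>i\<in>S. f i t)"
proof -
  have "(LINT t:A|lborel. (\<Sum>i\<in>S. f i t)) = integral\<^sup>L lborel (\<lambda>t. \<Sum>i\<in>S. indicator A t *\<^sub>R f i t)"
    unfolding set_lebesgue_integral_def by (simp add: scaleR_sum_right)
  also have "\<dots> = (\<Sum>i\<in>S. integral\<^sup>L lborel (\<lambda>t. indicator A t *\<^sub>R f i t))"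
    by (rule Bochner_Integration.integral_sum[where f="\<lambda>i t. indicator A t *\<^sub>R f i t"]) (use assms(2) in \<open>auto simp: set_integrable_def\<close>)
  finally show "(LINT t:A|lborel. (\<Sum>i\<in>S. f i t)) = (\<Sum>i\<in>S. LINT t:A|lborel. f i t)"
    by (simp add: set_lebesgue_integral_def)
  show "set_integrable lborel A (\<lambda>t. \<Sum>i\<in>S. f i t)"
    unfolding set_integrable_def scaleR_sum_right
    by (rule Bochner_Integration.integrable_sum) (use assms(2) in \<open>auto simp: set_integrable_def\<close>)
qed

lemma cis_set_integrable [simp]: "set_integrable lborel {0..2*pi} (\<lambda>t. c * cis (real j * t) * cnj (cis (real k * t)))"
  by (rule borel_integrable_atLeastAtMost') (intro continuous_intros)

lemma P_fin:
  fixes a b :: "nat \<Rightarrow> complex"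
  shows "(LINT t:{0..2*pi}|lborel. (\<Sum>j<N. a j * cis (real j * t)) * cnj (\<Sum>k<N. b k * cis (real k * t)))
      = 2 * pi * (\<Sum>j<N. a j * cnj (b j))"
proof -
  have e: "(\<Sum>j<N. a j * cis (real j * t)) * cnj (\<Sum>k<N. b k * cis (real k * t)) =
      (\<Sum>j<N. \<Sum>k<N. (a j * cnj (b k)) * cis (real j * t) * cnj (cis (real k * t)))" for t
    by (simp add: sum_product cnj_sum mult_ac)
  have "(LINT t:{0..2*pi}|lborel. (\<Sum>j<N. a j * cis (real j * t)) * cnj (\<Sum>k<N. b k * cis (real k * t)))
     = (\<Sum>j<N. \<Sum>k<N. LINT t:{0..2*pi}|lborel. (a j * cnj (b k)) * cis (real j * t) * cnj (cis (real k * t)))"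
    unfolding e
    by (subst set_integral_sum_fin(1), simp, rule set_integral_sum_fin(2), simp, simp)
       (subst set_integral_sum_fin(1), auto)
  also have "\<dots> = (\<Sum>j<N. \<Sum>k<N. (a j * cnj (b k)) * (if j = k then 2*pi else 0))"
    by (simp only: mult.assoc set_integral_mult_right cis_nat_integral)
  also have "\<dots> = 2 * pi * (\<Sum>j<N. a j * cnj (b j))"
    by (simp add: sum_distrib_left mult_ac if_distrib sum.delta cong: if_cong)
  finally show ?thesis .
qed


lemma term_le_suminf:
  fixes f :: "nat \<Rightarrow> real"
  assumes "summable f" "\<And>n. f n \<ge> 0"
  shows "f n \<le> suminf f"
proof -
  have "sum f {..<Suc n} \<le> suminf f" by (rule sum_le_suminf[OF assms(1)]) (use assms(2) in auto)
  moreover have "f n \<le> sum f {..<Suc n}" using assms(2) by (simp add: sum_nonneg)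
  ultimately show ?thesis by linarith
qed

lemma cis_meas [measurable]: "(\<lambda>x. cis (c * x)) \<in> borel_measurable borel"
  by (rule borel_measurable_continuous_onI) (intro continuous_intros)

lemma cnj_meas [measurable (raw)]: "f \<in> borel_measurable M \<Longrightarrow> (\<lambda>x. cnj (f x :: complex)) \<in> borel_measurable M"
  using borel_measurable_continuous_onI[of cnj] continuous_on_cnj[of UNIV "\<lambda>x. x"]
  by (simp add: measurable_compose[of f M borel cnj])

lemma partial_norm_le:
  fixes a :: "nat \<Rightarrow> complex"
  assumes "summable (\<lambda>j. norm (a j))"
  shows "norm (\<Sum>j<N. a j * cis (real j * t)) \<le> (\<Sum>j. norm (a j))"
proof -
  have "norm (\<Sum>j<N. a j * cis (real j * t)) \<le> (\<Sum>j<N. norm (a j))"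
    by (rule order_trans[OF norm_sum]) (simp add: norm_mult)
  also have "\<dots> \<le> (\<Sum>j. norm (a j))"
    by (rule sum_le_suminf[OF assms]) auto
  finally show ?thesis .
qed

lemma cis_series_lim:
  fixes a :: "nat \<Rightarrow> complex"
  assumes "summable (\<lambda>j. norm (a j))"
  shows "(\<lambda>N. \<Sum>j<N. a j * cis (real j * t)) \<longlonglongrightarrow> (\<Sum>j. a j * cis (real j * t))"
proof -
  have "summable (\<lambda>j. norm (a j * cis (real j * t)))" using assms by (simp add: norm_mult)
  hence "summable (\<lambda>j. a j * cis (real j * t))" by (rule summable_norm_cancel)
  thus ?thesis by (simp add: summable_LIMSEQ)
qed

lemma P_inf:
  fixes a b :: "nat \<Rightarrow> complex"
  assumes sa: "summable (\<lambda>j. norm (a j))" and sb: "summable (\<lambda>j. norm (b j))"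
  shows "(LINT t:{0..2*pi}|lborel. (\<Sum>j. a j * cis (real j * t)) * cnj (\<Sum>k. b k * cis (real k * t)))
      = 2 * pi * (\<Sum>j. a j * cnj (b j))"
proof -
  define I where "I = {0..2*pi}"
  define A where "A N t = (\<Sum>j<N. a j * cis (real j * t))" for N t
  define B where "B N t = (\<Sum>j<N. b j * cis (real j * t))" for N t
  define s where "s N t = indicator I t *\<^sub>R (A N t * cnj (B N t))" for N t
  define f where "f t = indicator I t *\<^sub>R ((\<Sum>j. a j * cis (real j * t)) * cnj (\<Sum>k. b k * cis (real k * t)))" for t
  define w where "w t = indicator I t * ((\<Sum>j. norm (a j)) * (\<Sum>j. norm (b j)))" for t
  have ms: "s N \<in> borel_measurable lborel" for N
    unfolding s_def A_def B_def I_def by measurable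
  have mf: "f \<in> borel_measurable lborel"
    unfolding f_def I_def by measurable
  have iw: "integrable lborel w"
    unfolding w_def I_def by (intro integrable_mult_left) auto
  have lim: "AE t in lborel. (\<lambda>N. s N t) \<longlonglongrightarrow> f t"
    unfolding s_def f_def A_def B_def
    by (intro AE_I2 tendsto_intros cis_series_lim sa sb)
  have bd: "AE t in lborel. norm (s N t) \<le> w t" for N
  proof (intro AE_I2)
    fix t
    have "norm (A N t * cnj (B N t)) \<le> (\<Sum>j. norm (a j)) * (\<Sum>j. norm (b j))"
      unfolding norm_mult complex_mod_cnj A_def B_def
      by (intro mult_mono partial_norm_le sa sb) (auto intro: suminf_nonneg sa)
    thus "norm (s N t) \<le> w t" unfolding s_def w_def by (auto simp: indicator_def)
  qed
  have "(\<lambda>N. integral\<^sup>L lborel (s N)) \<longlonglongrightarrow> integral\<^sup>L lborel f"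
    by (rule integral_dominated_convergence[OF mf ms iw lim bd])
  moreover have "integral\<^sup>L lborel (s N) = 2 * pi * (\<Sum>j<N. a j * cnj (b j))" for N
    using P_fin[of a N b] unfolding s_def A_def B_def I_def set_lebesgue_integral_def .
  ultimately have "(\<lambda>N. 2 * pi * (\<Sum>j<N. a j * cnj (b j))) \<longlonglongrightarrow> integral\<^sup>L lborel f"
    by simp
  moreover have "(\<lambda>N. 2 * pi * (\<Sum>j<N. a j * cnj (b j))) \<longlonglongrightarrow> 2 * pi * (\<Sum>j. a j * cnj (b j))"
  proof -
    have "summable (\<lambda>j. norm (a j * cnj (b j)))"
      by (rule summable_comparison_test[OF _ summable_mult2[OF sa, of "\<Sum>j. norm (b j)"]])
        (auto simp: norm_mult intro!: mult_left_mono term_le_suminf[OF sb])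
    hence "summable (\<lambda>j. a j * cnj (b j))" by (rule summable_norm_cancel)
    thus ?thesis by (intro tendsto_intros summable_LIMSEQ)
  qed
  ultimately have "integral\<^sup>L lborel f = 2 * pi * (\<Sum>j. a j * cnj (b j))"
    using LIMSEQ_unique by blast
  thus ?thesis unfolding f_def I_def set_lebesgue_integral_def .
qed

lemma u0: "u_coeff \<alpha> 0 j = of_real (sc \<alpha>) * cnj \<alpha> ^ j"
  by (simp add: u_coeff_def)

lemma theta_circle:
  assumes "norm \<alpha> < 1" "\<alpha> \<noteq> 0" "norm z = 1"
  shows "theta_fn \<alpha> z * cnj (theta_fn \<alpha> z) = 1"
proof -
  have zz: "z * cnj z = 1" using assms(3) by (metis complex_norm_square mult.commute norm_one of_real_1 power_one)
  have "1 - cnj \<alpha> * z = z * cnj (z - \<alpha>)" using zz by (simp add: algebra_simps)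
  moreover have "norm (cnj (z - \<alpha>)) = norm (\<alpha> - z)" by (simp only: complex_mod_cnj norm_minus_commute)
  ultimately have n: "norm (1 - cnj \<alpha> * z) = norm (\<alpha> - z)" using assms(3) by (simp only: norm_mult)
  have nz: "1 - cnj \<alpha> * z \<noteq> 0"
  proof
    assume "1 - cnj \<alpha> * z = 0"
    hence "norm (cnj \<alpha> * z) = 1" by (metis eq_iff_diff_eq_0 norm_one)
    thus False using assms by (simp add: norm_mult)
  qed
  have "\<alpha> \<noteq> z" using assms by auto
  hence "norm (theta_fn \<alpha> z) = 1"
    using assms(2) nz n by (simp add: theta_fn_def norm_mult norm_divide)
  thus ?thesis by (metis complex_norm_square mult.commute norm_one of_real_1 power_one)
qed

lemma psi_alpha:
  assumes "norm \<alpha> < 1"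
  shows "of_real (sc \<alpha>) * psi_fn \<alpha> \<alpha> = 1"
proof -
  have c: "cnj \<alpha> * \<alpha> = of_real ((norm \<alpha>)\<^sup>2)" by (simp only: complex_norm_square mult.commute)
  have l: "(norm \<alpha>)\<^sup>2 < 1" using assms by (simp add: power_less_one_iff abs_square_less_1)
  have ss: "sc \<alpha> * sc \<alpha> = 1 - (norm \<alpha>)\<^sup>2" using l by simp
  have d: "1 - cnj \<alpha> * \<alpha> = of_real (1 - (norm \<alpha>)\<^sup>2)"
    using c by simp
  have "of_real (sc \<alpha>) * psi_fn \<alpha> \<alpha> = of_real (sc \<alpha>) * (of_real (sc \<alpha>) / of_real (1 - (norm \<alpha>)\<^sup>2))"
    unfolding psi_fn_def d ..
  also have "\<dots> = of_real (sc \<alpha> * sc \<alpha> / (1 - (norm \<alpha>)\<^sup>2))"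
    by (simp only: of_real_mult of_real_divide times_divide_eq_right)
  also have "\<dots> = 1" using l ss by simp
  finally show ?thesis .
qed

lemma theta_alpha: "\<alpha> \<noteq> 0 \<Longrightarrow> theta_fn \<alpha> \<alpha> = 0"
  by (simp add: theta_fn_def)

lemma u_circle:
  assumes "norm \<alpha> < 1" "\<alpha> \<noteq> 0"
  shows "(\<Sum>j. u_coeff \<alpha> i j * cis (real j * t)) = psi_fn \<alpha> (cis t) * theta_fn \<alpha> (cis t) ^ i"
proof -
  have "norm (cnj \<alpha> * cis t) < 1" using assms by (simp add: norm_mult)
  from sums_unique[OF u_sums[OF assms(2) this, of i]]
  have "psi_fn \<alpha> (cis t) * theta_fn \<alpha> (cis t) ^ i = (\<Sum>j. u_coeff \<alpha> i j * cis t ^ j)" .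
  also have "(\<lambda>j. u_coeff \<alpha> i j * cis t ^ j) = (\<lambda>j. u_coeff \<alpha> i j * cis (real j * t))"
    by (simp only: Complex.DeMoivre)
  finally show ?thesis by simp
qed

lemma u_orth_ge:
  assumes a: "norm \<alpha> < 1" "\<alpha> \<noteq> 0" and ik: "k \<le> i"
  shows "(\<Sum>j. u_coeff \<alpha> i j * cnj (u_coeff \<alpha> k j)) = (if i = k then 1 else 0)"
proof -
  define F where "F p t = psi_fn \<alpha> (cis t) * theta_fn \<alpha> (cis t) ^ p" for p t
  have Fe: "F i t * cnj (F k t) = F (i - k) t * cnj (F 0 t)" for t
  proof -
    have th: "theta_fn \<alpha> (cis t) * cnj (theta_fn \<alpha> (cis t)) = 1" by (rule theta_circle[OF a]) simp
    have "theta_fn \<alpha> (cis t) ^ i = theta_fn \<alpha> (cis t) ^ (i - k) * theta_fn \<alpha> (cis t) ^ k"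
      using ik by (simp add: power_add[symmetric])
    hence "F i t * cnj (F k t) = F (i - k) t * cnj (F 0 t) * (theta_fn \<alpha> (cis t) * cnj (theta_fn \<alpha> (cis t))) ^ k"
      unfolding F_def by (simp add: power_mult_distrib mult_ac)
    thus ?thesis using th by simp
  qed
  have "2 * pi * (\<Sum>j. u_coeff \<alpha> i j * cnj (u_coeff \<alpha> k j)) =
     (LINT t:{0..2*pi}|lborel. (\<Sum>j. u_coeff \<alpha> i j * cis (real j * t)) * cnj (\<Sum>j. u_coeff \<alpha> k j * cis (real j * t)))"
    by (rule P_inf[symmetric]) (rule u_row1[OF a])+
  also have "\<dots> = (LINT t:{0..2*pi}|lborel. F i t * cnj (F k t))"
    unfolding F_def u_circle[OF a] ..
  also have "\<dots> = (LINT t:{0..2*pi}|lborel. F (i - k) t * cnj (F 0 t))"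
    unfolding Fe ..
  also have "\<dots> = (LINT t:{0..2*pi}|lborel. (\<Sum>j. u_coeff \<alpha> (i - k) j * cis (real j * t)) * cnj (\<Sum>j. u_coeff \<alpha> 0 j * cis (real j * t)))"
    unfolding F_def u_circle[OF a] ..
  also have "\<dots> = 2 * pi * (\<Sum>j. u_coeff \<alpha> (i - k) j * cnj (u_coeff \<alpha> 0 j))"
    by (rule P_inf) (rule u_row1[OF a])+
  finally have e1: "(\<Sum>j. u_coeff \<alpha> i j * cnj (u_coeff \<alpha> k j)) = (\<Sum>j. u_coeff \<alpha> (i - k) j * cnj (u_coeff \<alpha> 0 j))"
    by simp
  have "norm (cnj \<alpha> * \<alpha>) < 1" using a by (simp add: norm_mult abs_square_less_1 power2_eq_square[symmetric])
  note us = u_sums[OF a(2) this, of "i - k"]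
  have "(\<Sum>j. u_coeff \<alpha> (i - k) j * cnj (u_coeff \<alpha> 0 j)) = (\<Sum>j. of_real (sc \<alpha>) * (u_coeff \<alpha> (i - k) j * \<alpha> ^ j))"
    by (simp add: u0 mult_ac)
  also have "\<dots> = of_real (sc \<alpha>) * (psi_fn \<alpha> \<alpha> * theta_fn \<alpha> \<alpha> ^ (i - k))"
    by (rule sums_unique[symmetric], rule sums_mult[OF us])
  also have "\<dots> = (if i = k then 1 else 0)"
    using ik psi_alpha[OF a(1)] theta_alpha[OF a(2)] by auto
  finally show ?thesis using e1 by simp
qed

lemma u_orth:
  assumes a: "norm \<alpha> < 1" "\<alpha> \<noteq> 0"
  shows "(\<Sum>j. u_coeff \<alpha> i j * cnj (u_coeff \<alpha> k j)) = (if i = k then 1 else 0)"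
proof (cases "k \<le> i")
  case True thus ?thesis by (rule u_orth_ge[OF a])
next
  case False
  hence z: "(\<Sum>j. u_coeff \<alpha> k j * cnj (u_coeff \<alpha> i j)) = 0" using u_orth_ge[OF a, of i k] by simp
  have "summable (\<lambda>j. norm (u_coeff \<alpha> k j * cnj (u_coeff \<alpha> i j)))"
    by (rule summable_comparison_test[OF _ summable_mult2[OF u_row1[OF a, of k], of "\<Sum>j. norm (u_coeff \<alpha> i j)"]])
      (auto simp: norm_mult intro!: mult_left_mono term_le_suminf[OF u_row1[OF a]])
  hence "(\<lambda>j. u_coeff \<alpha> k j * cnj (u_coeff \<alpha> i j)) sums 0"
    using z by (metis summable_norm_cancel summable_sums)
  hence "(\<lambda>j. cnj (u_coeff \<alpha> k j * cnj (u_coeff \<alpha> i j))) sums cnj 0"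
    by (simp only: sums_cnj)
  hence "(\<lambda>j. u_coeff \<alpha> i j * cnj (u_coeff \<alpha> k j)) sums 0" by (simp add: mult.commute)
  thus ?thesis using False by (simp add: sums_iff)
qed

definition nrm2 :: "(nat \<Rightarrow> complex) \<Rightarrow> real" where
  "nrm2 x = (\<Sum>n. (cmod (x n))\<^sup>2)"

definition mop :: "(nat \<Rightarrow> nat \<Rightarrow> complex) \<Rightarrow> (nat \<Rightarrow> complex) \<Rightarrow> nat \<Rightarrow> complex" where
  "mop a h = (\<lambda>i. \<Sum>j. a i j * h j)"

definition trunc :: "nat \<Rightarrow> (nat \<Rightarrow> complex) \<Rightarrow> nat \<Rightarrow> complex" where
  "trunc N h = (\<lambda>j. if j < N then h j else 0)"

lemma H2_iff: "x \<in> H2 \<longleftrightarrow> summable (\<lambda>n. (cmod (x n))\<^sup>2)"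
  by (simp add: H2_def)

lemma nrm2_nonneg: "x \<in> H2 \<Longrightarrow> nrm2 x \<ge> 0"
  unfolding nrm2_def H2_iff by (rule suminf_nonneg) auto

lemma CS_summable:
  assumes "x \<in> H2" "y \<in> H2"
  shows "summable (\<lambda>n. cmod (x n) * cmod (y n))"
proof (rule summable_comparison_test[OF _ summable_add[OF assms[unfolded H2_iff]]])
  show "\<exists>N. \<forall>n\<ge>N. norm (cmod (x n) * cmod (y n)) \<le> (cmod (x n))\<^sup>2 + (cmod (y n))\<^sup>2"
  proof (intro exI[of _ 0] allI impI)
    fix n
    have "2 * (cmod (x n) * cmod (y n)) \<le> (cmod (x n))\<^sup>2 + (cmod (y n))\<^sup>2"
      using sum_squares_bound[of "cmod (x n)" "cmod (y n)"] by (simp add: mult_ac)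
    moreover have "cmod (x n) * cmod (y n) \<ge> 0" by simp
    moreover have "norm (cmod (x n) * cmod (y n)) = cmod (x n) * cmod (y n)" by simp
    ultimately show "norm (cmod (x n) * cmod (y n)) \<le> (cmod (x n))\<^sup>2 + (cmod (y n))\<^sup>2" by linarith
  qed
qed

lemma CS_ineq:
  assumes "x \<in> H2" "y \<in> H2"
  shows "(\<Sum>n. cmod (x n) * cmod (y n))\<^sup>2 \<le> nrm2 x * nrm2 y"
proof -
  have sx: "summable (\<lambda>n. (cmod (x n))\<^sup>2)" and sy: "summable (\<lambda>n. (cmod (y n))\<^sup>2)"
    using assms by (auto simp: H2_iff)
  note sxy = CS_summable[OF assms]
  have "(\<lambda>N. (\<Sum>n<N. cmod (x n) * cmod (y n))\<^sup>2) \<longlonglongrightarrow> (\<Sum>n. cmod (x n) * cmod (y n))\<^sup>2"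
    by (intro tendsto_intros summable_LIMSEQ sxy)
  moreover have "(\<Sum>n<N. cmod (x n) * cmod (y n))\<^sup>2 \<le> nrm2 x * nrm2 y" for N
  proof -
    have "(\<Sum>n<N. cmod (x n) * cmod (y n))\<^sup>2 \<le> (\<Sum>n<N. (cmod (x n))\<^sup>2) * (\<Sum>n<N. (cmod (y n))\<^sup>2)"
      by (rule Cauchy_Schwarz_ineq_sum)
    also have "\<dots> \<le> nrm2 x * nrm2 y"
      unfolding nrm2_def
      by (intro mult_mono sum_le_suminf sx sy suminf_nonneg sum_nonneg) auto
    finally show ?thesis .
  qed
  ultimately show ?thesis by (intro LIMSEQ_le_const2) auto
qed

lemma inner_summable:
  assumes "x \<in> H2" "y \<in> H2"
  shows "summable (\<lambda>n. x n * cnj (y n))"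
  by (rule summable_norm_cancel) (use CS_summable[OF assms] in \<open>simp add: norm_mult\<close>)

lemma inner_bound:
  assumes "x \<in> H2" "y \<in> H2"
  shows "(cmod (h2_inner x y))\<^sup>2 \<le> nrm2 x * nrm2 y"
proof -
  have "cmod (h2_inner x y) \<le> (\<Sum>n. cmod (x n) * cmod (y n))"
    unfolding h2_inner_def
    using summable_norm[of "\<lambda>n. x n * cnj (y n)"] CS_summable[OF assms] by (simp add: norm_mult)
  hence "(cmod (h2_inner x y))\<^sup>2 \<le> (\<Sum>n. cmod (x n) * cmod (y n))\<^sup>2"
    by (intro power_mono) auto
  thus ?thesis using CS_ineq[OF assms] by linarith
qed

lemma H2_diff: "x \<in> H2 \<Longrightarrow> y \<in> H2 \<Longrightarrow> (\<lambda>n. x n - y n) \<in> H2"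
proof -
  assume a: "x \<in> H2" "y \<in> H2"
  have "summable (\<lambda>n. 2 * (cmod (x n))\<^sup>2 + 2 * (cmod (y n))\<^sup>2)"
    using a by (auto simp: H2_iff intro!: summable_add summable_mult)
  moreover have "(cmod (x n - y n))\<^sup>2 \<le> 2 * (cmod (x n))\<^sup>2 + 2 * (cmod (y n))\<^sup>2" for n
  proof -
    have "cmod (x n - y n) \<le> cmod (x n) + cmod (y n)" by (rule norm_triangle_ineq4)
    hence "(cmod (x n - y n))\<^sup>2 \<le> (cmod (x n) + cmod (y n))\<^sup>2" by (intro power_mono) auto
    also have "\<dots> \<le> 2 * (cmod (x n))\<^sup>2 + 2 * (cmod (y n))\<^sup>2"
      using sum_squares_bound[of "cmod (x n)" "cmod (y n)"] by (simp add: power2_sum)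
    finally show ?thesis .
  qed
  ultimately show ?thesis unfolding H2_iff
    by (intro summable_comparison_test[of "\<lambda>n. (cmod (x n - y n))\<^sup>2" "\<lambda>n. 2 * (cmod (x n))\<^sup>2 + 2 * (cmod (y n))\<^sup>2"]) auto
qed

lemma H2_cnj: "x \<in> H2 \<Longrightarrow> (\<lambda>n. cnj (x n)) \<in> H2"
  by (simp add: H2_iff)

lemma H2_trunc: "trunc N x \<in> H2"
  unfolding H2_iff trunc_def
  by (rule summable_finite[of "{..<N}"]) auto

lemma H2_bounded:
  assumes "x \<in> H2" shows "\<exists>B. \<forall>n. cmod (x n) \<le> B"
proof -
  have s: "summable (\<lambda>n. (cmod (x n))\<^sup>2)" using assms by (simp add: H2_iff)
  have "(cmod (x n))\<^sup>2 \<le> nrm2 x" for n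
    unfolding nrm2_def by (rule term_le_suminf[OF s]) auto
  hence "cmod (x n) \<le> sqrt (nrm2 x)" for n by (simp add: real_le_rsqrt)
  thus ?thesis by blast
qed

lemma trunc_tail:
  assumes "x \<in> H2"
  shows "(\<lambda>N. nrm2 (\<lambda>n. x n - trunc N x n)) \<longlonglongrightarrow> 0"
proof -
  have s: "summable (\<lambda>n. (cmod (x n))\<^sup>2)" using assms by (simp add: H2_iff)
  have e: "nrm2 (\<lambda>n. x n - trunc N x n) = nrm2 x - (\<Sum>n<N. (cmod (x n))\<^sup>2)" for N
  proof -
    have "(\<lambda>n. (cmod (x n - trunc N x n))\<^sup>2) = (\<lambda>n. if n \<in> {..<N} then 0 else (cmod (x n))\<^sup>2)"
      by (auto simp: trunc_def)
    moreover have "(\<lambda>n. if n \<in> {..<N} then 0 else (cmod (x n))\<^sup>2) sums (nrm2 x - (\<Sum>n<N. (cmod (x n))\<^sup>2))"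
      unfolding nrm2_def by (rule sums_If_finite_set'[OF summable_sums[OF s]]) (auto simp: sum_negf)
    ultimately show ?thesis unfolding nrm2_def by (simp add: sums_iff)
  qed
  have "(\<lambda>N. nrm2 x - (\<Sum>n<N. (cmod (x n))\<^sup>2)) \<longlonglongrightarrow> nrm2 x - nrm2 x"
    unfolding nrm2_def by (intro tendsto_intros summable_LIMSEQ s)
  thus ?thesis unfolding e by simp
qed

locale fbound =
  fixes a :: "nat \<Rightarrow> nat \<Rightarrow> complex" and C :: real
  assumes C0: "C \<ge> 0"
    and FB: "\<And>h N K. (\<Sum>i<K. (cmod (\<Sum>j<N. a i j * h j))\<^sup>2) \<le> C * (\<Sum>j<N. (cmod (h j))\<^sup>2)"
begin

lemma row_H2: "(\<lambda>j. a i j) \<in> H2"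
  unfolding H2_iff
proof (rule summableI_nonneg_bounded[where x=C])
  fix n
  define s where "s = (\<Sum>j<n. (cmod (a i j))\<^sup>2)"
  have s0: "s \<ge> 0" unfolding s_def by (intro sum_nonneg) auto
  have e: "(\<Sum>j<n. a i j * cnj (a i j)) = of_real s"
    unfolding s_def of_real_sum by (intro sum.cong refl) (simp only: complex_norm_square)
  have "s\<^sup>2 = (cmod (\<Sum>j<n. a i j * cnj (a i j)))\<^sup>2" using s0 by (simp add: e)
  also have "\<dots> \<le> (\<Sum>i'<Suc i. (cmod (\<Sum>j<n. a i' j * cnj (a i j)))\<^sup>2)"
    by (rule member_le_sum[where f="\<lambda>i'. (cmod (\<Sum>j<n. a i' j * cnj (a i j)))\<^sup>2" and i=i]) auto
  also have "\<dots> \<le> C * (\<Sum>j<n. (cmod (cnj (a i j)))\<^sup>2)" by (rule FB)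
  also have "\<dots> = C * s" by (simp add: s_def)
  finally have ss: "s * s \<le> C * s" by (simp add: power2_eq_square)
  have "s \<le> C"
  proof (cases "s = 0")
    case True thus ?thesis using C0 by simp
  next
    case False
    hence "s > 0" using s0 by simp
    thus ?thesis using ss by (simp add: mult_le_cancel_right)
  qed
  thus "(\<Sum>j<n. (cmod (a i j))\<^sup>2) \<le> C" unfolding s_def .
qed auto

lemma row_summable: "h \<in> H2 \<Longrightarrow> summable (\<lambda>j. a i j * h j)"
  using inner_summable[OF row_H2[of i] H2_cnj[of h]] by simp

lemma row_lim: "h \<in> H2 \<Longrightarrow> (\<lambda>N. \<Sum>j<N. a i j * h j) \<longlonglongrightarrow> mop a h i"
  unfolding mop_def by (rule summable_LIMSEQ[OF row_summable])

lemma mop_bound: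
  assumes h: "h \<in> H2"
  shows "mop a h \<in> H2" and "nrm2 (mop a h) \<le> C * nrm2 h"
proof -
  have sh: "summable (\<lambda>n. (cmod (h n))\<^sup>2)" using h by (simp add: H2_iff)
  have pk: "(\<Sum>i<K. (cmod (mop a h i))\<^sup>2) \<le> C * nrm2 h" for K
  proof -
    have "(\<lambda>N. \<Sum>i<K. (cmod (\<Sum>j<N. a i j * h j))\<^sup>2) \<longlonglongrightarrow> (\<Sum>i<K. (cmod (mop a h i))\<^sup>2)"
      by (intro tendsto_intros row_lim h)
    moreover have "(\<Sum>i<K. (cmod (\<Sum>j<N. a i j * h j))\<^sup>2) \<le> C * nrm2 h" for N
    proof -
      have "(\<Sum>i<K. (cmod (\<Sum>j<N. a i j * h j))\<^sup>2) \<le> C * (\<Sum>j<N. (cmod (h j))\<^sup>2)" by (rule FB)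
      also have "\<dots> \<le> C * nrm2 h"
        unfolding nrm2_def by (intro mult_left_mono C0 sum_le_suminf sh) auto
      finally show ?thesis .
    qed
    ultimately show ?thesis by (intro LIMSEQ_le_const2) auto
  qed
  show "mop a h \<in> H2" unfolding H2_iff
    by (rule summableI_nonneg_bounded[OF _ pk]) auto
  thus "nrm2 (mop a h) \<le> C * nrm2 h" unfolding nrm2_def H2_iff
    by (rule suminf_le_const) (rule pk[unfolded nrm2_def])
qed

lemma mop_diff:
  assumes "h \<in> H2" "g \<in> H2"
  shows "mop a (\<lambda>j. h j - g j) = (\<lambda>i. mop a h i - mop a g i)"
proof
  fix i
  show "mop a (\<lambda>j. h j - g j) i = mop a h i - mop a g i"
    unfolding mop_def using suminf_diff[OF row_summable[OF assms(1)] row_summable[OF assms(2)], of i]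
    by (simp add: algebra_simps)
qed

lemma mop_cont:
  assumes "h \<in> H2"
  shows "(\<lambda>N. nrm2 (\<lambda>i. mop a h i - mop a (trunc N h) i)) \<longlonglongrightarrow> 0"
proof (rule tendsto_sandwich[of "\<lambda>_. 0" _ _ "\<lambda>N. C * nrm2 (\<lambda>n. h n - trunc N h n)"])
  show "\<forall>\<^sub>F N in sequentially. nrm2 (\<lambda>i. mop a h i - mop a (trunc N h) i) \<le> C * nrm2 (\<lambda>n. h n - trunc N h n)"
  proof (rule always_eventually, rule allI)
    fix N
    show "nrm2 (\<lambda>i. mop a h i - mop a (trunc N h) i) \<le> C * nrm2 (\<lambda>n. h n - trunc N h n)"
      using mop_bound(2)[OF H2_diff[OF assms H2_trunc[of N h]]] mop_diff[OF assms H2_trunc[of N h]] by simp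
  qed
  show "\<forall>\<^sub>F N in sequentially. 0 \<le> nrm2 (\<lambda>i. mop a h i - mop a (trunc N h) i)"
  proof (rule always_eventually, rule allI)
    fix N
    show "0 \<le> nrm2 (\<lambda>i. mop a h i - mop a (trunc N h) i)"
      by (rule nrm2_nonneg, rule H2_diff) (rule mop_bound(1)[OF assms], rule mop_bound(1)[OF H2_trunc])
  qed
  show "(\<lambda>N. 0) \<longlonglongrightarrow> (0::real)" by simp
  have "(\<lambda>N. C * nrm2 (\<lambda>n. h n - trunc N h n)) \<longlonglongrightarrow> C * 0"
    by (intro tendsto_mult tendsto_const trunc_tail assms)
  thus "(\<lambda>N. C * nrm2 (\<lambda>n. h n - trunc N h n)) \<longlonglongrightarrow> 0" by simp
qed

end

lemma phi_data:
  assumes "L_infty_circle \<phi>"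
  obtains M where "M \<ge> 1" "AE t in lborel. t \<in> {0..2*pi} \<longrightarrow> cmod (\<phi> (cis t)) \<le> M"
proof -
  from assms obtain M0 where "AE t in lborel. t \<in> {0..2*pi} \<longrightarrow> cmod (\<phi> (cis t)) \<le> M0"
    unfolding L_infty_circle_def by blast
  hence "AE t in lborel. t \<in> {0..2*pi} \<longrightarrow> cmod (\<phi> (cis t)) \<le> max M0 1"
    by eventually_elim auto
  thus ?thesis using that[of "max M0 1"] by auto
qed

lemma phi_meas [measurable]: "L_infty_circle \<phi> \<Longrightarrow> (\<lambda>t. \<phi> (cis t)) \<in> borel_measurable lborel"
  by (simp add: L_infty_circle_def)

lemma phi_setint:
  assumes phi: "L_infty_circle \<phi>" and c: "continuous_on UNIV c"
  shows "set_integrable lborel {0..2*pi} (\<lambda>t. \<phi> (cis t) * c t)"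
proof -
  obtain M where M: "M \<ge> 1" "AE t in lborel. t \<in> {0..2*pi} \<longrightarrow> cmod (\<phi> (cis t)) \<le> M"
    using phi_data[OF phi] by blast
  obtain B where B: "B \<ge> 0" "\<And>t. t \<in> {0..2*pi} \<Longrightarrow> norm (c t) \<le> B"
    using continuous_on_compact_bound[of "{0..2*pi}" c] c continuous_on_subset by blast
  have ci: "set_integrable lborel {0..2*pi} (\<lambda>t. complex_of_real (M * B))"
    by (rule borel_integrable_atLeastAtMost') (intro continuous_intros)
  have cm: "c \<in> borel_measurable borel" by (rule borel_measurable_continuous_onI[OF c])
  have "set_borel_measurable lborel {0..2*pi} (\<lambda>t. \<phi> (cis t) * c t)"
    unfolding set_borel_measurable_def using phi cm by measurable
  moreover have "AE t in lborel. t \<in> {0..2*pi} \<longrightarrow> norm (\<phi> (cis t) * c t) \<le> norm (complex_of_real (M * B))"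
    using M(2)
  proof eventually_elim
    case (elim t)
    show ?case
    proof
      assume t: "t \<in> {0..2*pi}"
      have "norm (\<phi> (cis t) * c t) \<le> M * B"
        unfolding norm_mult by (intro mult_mono B(2) t elim[rule_format]) (use M B in auto)
      moreover have "norm (complex_of_real (M * B)) = M * B" using M B by (simp only: norm_of_real abs_of_nonneg mult_nonneg_nonneg)
      ultimately show "norm (\<phi> (cis t) * c t) \<le> norm (complex_of_real (M * B))" by simp
    qed
  qed
  ultimately show ?thesis by (rule set_integrable_bound[OF ci])
qed

lemma set_integral_norm_le_const:
  fixes g :: "real \<Rightarrow> complex"
  assumes gi: "set_integrable lborel {0..2*pi} g" and M: "AE t in lborel. t \<in> {0..2*pi} \<longrightarrow> norm (g t) \<le> h t"
    and hi: "set_integrable lborel {0..2*pi} h"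
  shows "norm (LINT t:{0..2*pi}|lborel. g t) \<le> (LINT t:{0..2*pi}|lborel. h t)"
proof -
  have "norm (LINT t:{0..2*pi}|lborel. g t) \<le> (LINT t:{0..2*pi}|lborel. norm (g t))"
    by (rule set_integral_norm_bound[OF gi])
  also have "\<dots> \<le> (LINT t:{0..2*pi}|lborel. h t)"
    by (rule set_integral_mono_AE[OF set_integrable_norm[OF gi] hi]) (use M in auto)
  finally show ?thesis .
qed

lemma fourier_bound:
  assumes phi: "L_infty_circle \<phi>" and M: "AE t in lborel. t \<in> {0..2*pi} \<longrightarrow> cmod (\<phi> (cis t)) \<le> M"
  shows "cmod (fourier_coeff \<phi> n) \<le> M"
proof -
  have gi: "set_integrable lborel {0..2*pi} (\<lambda>t. \<phi> (cis t) * cis (- (of_int n * t)))"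
    by (rule phi_setint[OF phi]) (intro continuous_intros)
  have hi: "set_integrable lborel {0..2*pi} (\<lambda>t. M)"
    by (rule borel_integrable_atLeastAtMost') (intro continuous_intros)
  have "norm (LINT t:{0..2*pi}|lborel. \<phi> (cis t) * cis (- (of_int n * t))) \<le> (LINT t:{0..2*pi}|lborel. M)"
    by (rule set_integral_norm_le_const[OF gi _ hi]) (use M in \<open>auto simp: norm_mult\<close>)
  also have "\<dots> = 2 * pi * M" by (subst set_integral_const) auto
  finally have "norm (LINT t:{0..2*pi}|lborel. \<phi> (cis t) * cis (- (of_int n * t))) \<le> 2 * pi * M" .
  thus ?thesis unfolding fourier_coeff_def by (simp add: norm_divide divide_le_eq mult_ac)
qed

lemma trig_l2:
  fixes f :: "nat \<Rightarrow> complex"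
  shows "(LINT t:{0..2*pi}|lborel. (cmod (\<Sum>k<N. f k * cis (real k * t)))\<^sup>2) = 2 * pi * (\<Sum>k<N. (cmod (f k))\<^sup>2)"
proof -
  have "complex_of_real (LINT t:{0..2*pi}|lborel. (cmod (\<Sum>k<N. f k * cis (real k * t)))\<^sup>2) =
     (LINT t:{0..2*pi}|lborel. complex_of_real ((cmod (\<Sum>k<N. f k * cis (real k * t)))\<^sup>2))"
    by (rule set_integral_complex_of_real[symmetric])
  also have "\<dots> = (LINT t:{0..2*pi}|lborel. (\<Sum>k<N. f k * cis (real k * t)) * cnj (\<Sum>k<N. f k * cis (real k * t)))"
    by (simp only: complex_norm_square)
  also have "\<dots> = 2 * pi * (\<Sum>k<N. f k * cnj (f k))" by (rule P_fin)
  also have "\<dots> = complex_of_real (2 * pi * (\<Sum>k<N. (cmod (f k))\<^sup>2))"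
    by (simp only: of_real_mult of_real_sum complex_norm_square of_real_numeral)
  finally show ?thesis by (simp only: of_real_eq_iff)
qed

lemma toep_bilin:
  assumes phi: "L_infty_circle \<phi>" and M: "AE t in lborel. t \<in> {0..2*pi} \<longrightarrow> cmod (\<phi> (cis t)) \<le> M"
    and M0: "M \<ge> 0" and l: "l > 0"
  shows "cmod (\<Sum>m<K. \<Sum>k<N. fourier_coeff \<phi> (int m - int k) * f k * cnj (g m))
     \<le> M / 2 * (l * (\<Sum>k<N. (cmod (f k))\<^sup>2) + (1 / l) * (\<Sum>m<K. (cmod (g m))\<^sup>2))"
proof -
  define F where "F t = (\<Sum>k<N. f k * cis (real k * t))" for t
  define G where "G t = (\<Sum>m<K. g m * cis (real m * t))" for t
  have cF: "continuous_on UNIV F" unfolding F_def by (intro continuous_intros)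
  have cG: "continuous_on UNIV G" unfolding G_def by (intro continuous_intros)
  have si: "set_integrable lborel {0..2*pi} (\<lambda>t. \<phi> (cis t) * (c * cis (- (of_int n * t))))" for c n
    by (rule phi_setint[OF phi]) (intro continuous_intros)
  have e1: "\<phi> (cis t) * (F t * cnj (G t)) = (\<Sum>m<K. \<Sum>k<N. \<phi> (cis t) * ((f k * cnj (g m)) * cis (- (of_int (int m - int k) * t))))" for t
  proof -
    have "cis (real k * t) * cnj (cis (real m * t)) = cis (- (of_int (int m - int k) * t))" for k m
      by (simp add: cis_mult cis_cnj algebra_simps)
    hence "F t * cnj (G t) = (\<Sum>m<K. \<Sum>k<N. (f k * cnj (g m)) * cis (- (of_int (int m - int k) * t)))"
      unfolding F_def G_def by (simp add: sum_product cnj_sum mult_ac sum.swap[of _ "{..<N}"])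
    thus ?thesis by (simp add: sum_distrib_left)
  qed
  have "(\<Sum>m<K. \<Sum>k<N. fourier_coeff \<phi> (int m - int k) * f k * cnj (g m)) =
     (\<Sum>m<K. \<Sum>k<N. (LINT t:{0..2*pi}|lborel. \<phi> (cis t) * ((f k * cnj (g m)) * cis (- (of_int (int m - int k) * t))))) / (2 * pi)"
  proof -
    have t: "fourier_coeff \<phi> (int m - int k) * f k * cnj (g m) =
      (LINT t:{0..2*pi}|lborel. \<phi> (cis t) * ((f k * cnj (g m)) * cis (- (of_int (int m - int k) * t)))) / (2 * pi)" for m k
    proof -
      have a: "(\<lambda>t. \<phi> (cis t) * ((f k * cnj (g m)) * cis (- (of_int (int m - int k) * t)))) =
          (\<lambda>t. (f k * cnj (g m)) * (\<phi> (cis t) * cis (- (of_int (int m - int k) * t))))"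
        by (simp add: mult_ac)
      show ?thesis unfolding fourier_coeff_def a set_integral_mult_right by (simp add: mult_ac)
    qed
    show ?thesis unfolding t by (simp add: sum_divide_distrib)
  qed
  also have "\<dots> = (LINT t:{0..2*pi}|lborel. \<phi> (cis t) * (F t * cnj (G t))) / (2 * pi)"
    unfolding e1
    by (subst set_integral_sum_fin(1), simp, rule set_integral_sum_fin(2), simp, rule si)
       (subst set_integral_sum_fin(1), simp, rule si, simp)
  finally have eq: "(\<Sum>m<K. \<Sum>k<N. fourier_coeff \<phi> (int m - int k) * f k * cnj (g m)) =
     (LINT t:{0..2*pi}|lborel. \<phi> (cis t) * (F t * cnj (G t))) / (2 * pi)" .
  define H where "H t = M / 2 * (l * (cmod (F t))\<^sup>2 + (1 / l) * (cmod (G t))\<^sup>2)" for t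
  have gi: "set_integrable lborel {0..2*pi} (\<lambda>t. \<phi> (cis t) * (F t * cnj (G t)))"
    by (rule phi_setint[OF phi]) (intro continuous_intros cF cG)
  have Hi: "set_integrable lborel {0..2*pi} H"
    unfolding H_def by (rule borel_integrable_atLeastAtMost') (intro continuous_intros continuous_on_subset[OF cF] continuous_on_subset[OF cG], auto)
  have bnd: "AE t in lborel. t \<in> {0..2*pi} \<longrightarrow> norm (\<phi> (cis t) * (F t * cnj (G t))) \<le> H t"
    using M
  proof eventually_elim
    case (elim t)
    show ?case
    proof
      assume t: "t \<in> {0..2*pi}"
      have amgm: "cmod (F t) * cmod (G t) \<le> (l * (cmod (F t))\<^sup>2 + (1 / l) * (cmod (G t))\<^sup>2) / 2"
      proof -
        define x where "x = cmod (F t)"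
        define y where "y = cmod (G t)"
        have "0 \<le> (l * x - y)\<^sup>2" by simp
        hence h: "2 * l * (x * y) \<le> (l * x)\<^sup>2 + y\<^sup>2"
          by (simp add: power2_eq_square algebra_simps)
        have e: "(l * x\<^sup>2 + (1 / l) * y\<^sup>2) / 2 = ((l * x)\<^sup>2 + y\<^sup>2) / (2 * l)"
          using l by (simp add: field_simps power2_eq_square)
        have "x * y \<le> ((l * x)\<^sup>2 + y\<^sup>2) / (2 * l)"
          using h l by (simp add: pos_le_divide_eq mult_ac)
        thus ?thesis unfolding x_def[symmetric] y_def[symmetric] e .
      qed
      have "norm (\<phi> (cis t) * (F t * cnj (G t))) = cmod (\<phi> (cis t)) * (cmod (F t) * cmod (G t))"
        by (simp add: norm_mult)
      also have "\<dots> \<le> M * ((l * (cmod (F t))\<^sup>2 + (1 / l) * (cmod (G t))\<^sup>2) / 2)"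
        by (intro mult_mono amgm elim[rule_format] t) (use M0 in auto)
      also have "\<dots> = H t" by (simp add: H_def)
      finally show "norm (\<phi> (cis t) * (F t * cnj (G t))) \<le> H t" .
    qed
  qed
  have "norm (LINT t:{0..2*pi}|lborel. \<phi> (cis t) * (F t * cnj (G t))) \<le> (LINT t:{0..2*pi}|lborel. H t)"
    by (rule set_integral_norm_le_const[OF gi bnd Hi])
  also have "(LINT t:{0..2*pi}|lborel. H t) =
      M / 2 * (l * (LINT t:{0..2*pi}|lborel. (cmod (F t))\<^sup>2) + (1 / l) * (LINT t:{0..2*pi}|lborel. (cmod (G t))\<^sup>2))"
  proof -
    have iF: "set_integrable lborel {0..2*pi} (\<lambda>t. (cmod (F t))\<^sup>2)"
      by (rule borel_integrable_atLeastAtMost') (intro continuous_intros continuous_on_subset[OF cF], auto)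
    have iG: "set_integrable lborel {0..2*pi} (\<lambda>t. (cmod (G t))\<^sup>2)"
      by (rule borel_integrable_atLeastAtMost') (intro continuous_intros continuous_on_subset[OF cG], auto)
    have Hs: "H = (\<lambda>t. (M / 2 * l) * (cmod (F t))\<^sup>2 + (M / 2 * (1 / l)) * (cmod (G t))\<^sup>2)"
      by (rule ext) (simp add: H_def algebra_simps)
    have "(LINT t:{0..2*pi}|lborel. H t) = (LINT t:{0..2*pi}|lborel. (M / 2 * l) * (cmod (F t))\<^sup>2) +
       (LINT t:{0..2*pi}|lborel. (M / 2 * (1 / l)) * (cmod (G t))\<^sup>2)"
      unfolding Hs by (rule set_integral_add(2)) (use iF iG in auto)
    also have "\<dots> = (M / 2 * l) * (LINT t:{0..2*pi}|lborel. (cmod (F t))\<^sup>2) +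
       (M / 2 * (1 / l)) * (LINT t:{0..2*pi}|lborel. (cmod (G t))\<^sup>2)"
      by (simp only: set_integral_mult_right)
    finally show ?thesis by (simp add: algebra_simps)
  qed
  also have "\<dots> = 2 * pi * (M / 2 * (l * (\<Sum>k<N. (cmod (f k))\<^sup>2) + (1 / l) * (\<Sum>m<K. (cmod (g m))\<^sup>2)))"
    unfolding F_def G_def trig_l2 by (simp add: ring_distribs mult_ac)
  finally have fin: "norm (LINT t:{0..2*pi}|lborel. \<phi> (cis t) * (F t * cnj (G t))) \<le>
     2 * pi * (M / 2 * (l * (\<Sum>k<N. (cmod (f k))\<^sup>2) + (1 / l) * (\<Sum>m<K. (cmod (g m))\<^sup>2)))" .
  have n2: "cmod (LINT t:{0..2*pi}|lborel. \<phi> (cis t) * (F t * cnj (G t))) / (2 * pi) =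
     cmod ((LINT t:{0..2*pi}|lborel. \<phi> (cis t) * (F t * cnj (G t))) / (2 * pi))"
    by (simp add: norm_divide)
  show ?thesis unfolding eq n2[symmetric] using fin by (simp add: pos_divide_le_eq mult.commute)
qed

definition tm :: "(complex \<Rightarrow> complex) \<Rightarrow> nat \<Rightarrow> nat \<Rightarrow> complex" where
  "tm \<phi> m k = fourier_coeff \<phi> (int m - int k)"
definition sm :: "(complex \<Rightarrow> complex) \<Rightarrow> nat \<Rightarrow> nat \<Rightarrow> complex" where
  "sm \<phi> i j = cnj (fourier_coeff \<phi> (int j - int i))"
definition wm :: "complex \<Rightarrow> nat \<Rightarrow> nat \<Rightarrow> complex" where
  "wm \<alpha> j i = u_coeff \<alpha> i j"

lemma toeplitz_mop: "toeplitz \<phi> = mop (tm \<phi>)"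
  unfolding toeplitz_def mop_def tm_def by simp

lemma cnorm_sq: "complex_of_real ((cmod z)\<^sup>2) = z * cnj z"
  by (rule complex_norm_square)

lemma fbound_tm:
  assumes phi: "L_infty_circle \<phi>" and M: "AE t in lborel. t \<in> {0..2*pi} \<longrightarrow> cmod (\<phi> (cis t)) \<le> M" and M1: "M \<ge> 1"
  shows "fbound (tm \<phi>) (M\<^sup>2)"
proof
  show "0 \<le> M\<^sup>2" by simp
  fix h :: "nat \<Rightarrow> complex" and N K
  define g where "g m = (\<Sum>k<N. tm \<phi> m k * h k)" for m
  define X where "X = (\<Sum>m<K. (cmod (g m))\<^sup>2)"
  define H where "H = (\<Sum>k<N. (cmod (h k))\<^sup>2)"
  have X0: "X \<ge> 0" unfolding X_def by (intro sum_nonneg) auto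
  have "(\<Sum>m<K. \<Sum>k<N. fourier_coeff \<phi> (int m - int k) * h k * cnj (g m)) = (\<Sum>m<K. g m * cnj (g m))"
    unfolding g_def tm_def by (simp add: sum_distrib_right)
  also have "\<dots> = of_real X" unfolding X_def by (simp only: of_real_sum cnorm_sq)
  finally have e: "(\<Sum>m<K. \<Sum>k<N. fourier_coeff \<phi> (int m - int k) * h k * cnj (g m)) = of_real X" .
  have "X \<le> M / 2 * (M * H + (1 / M) * X)"
    using toep_bilin[OF phi M, where l=M and K=K and N=N and f=h and g=g] M1 X0 unfolding e H_def[symmetric] X_def[symmetric] by simp
  hence "X \<le> (M\<^sup>2 * H + X) / 2" using M1 by (simp add: field_simps power2_eq_square)
  thus "(\<Sum>i<K. (cmod (\<Sum>j<N. tm \<phi> i j * h j))\<^sup>2) \<le> M\<^sup>2 * (\<Sum>j<N. (cmod (h j))\<^sup>2)"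
    unfolding X_def[symmetric, unfolded g_def] H_def[symmetric] by simp
qed


lemma fbound_sm:
  assumes phi: "L_infty_circle \<phi>" and M: "AE t in lborel. t \<in> {0..2*pi} \<longrightarrow> cmod (\<phi> (cis t)) \<le> M" and M1: "M \<ge> 1"
  shows "fbound (sm \<phi>) (M\<^sup>2)"
proof
  show "0 \<le> M\<^sup>2" by simp
  fix h :: "nat \<Rightarrow> complex" and N K
  define s where "s i = (\<Sum>j<N. sm \<phi> i j * h j)" for i
  define Y where "Y = (\<Sum>i<K. (cmod (s i))\<^sup>2)"
  define H where "H = (\<Sum>j<N. (cmod (h j))\<^sup>2)"
  have Y0: "Y \<ge> 0" unfolding Y_def by (intro sum_nonneg) auto
  have "(\<Sum>m<N. \<Sum>k<K. fourier_coeff \<phi> (int m - int k) * s k * cnj (h m)) = (\<Sum>k<K. s k * cnj (s k))"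
  proof -
    have c: "cnj (s k) = (\<Sum>j<N. fourier_coeff \<phi> (int j - int k) * cnj (h j))" for k
      by (simp add: s_def sm_def cnj_sum)
    have "(\<Sum>k<K. s k * cnj (s k)) = (\<Sum>k<K. \<Sum>j<N. s k * (fourier_coeff \<phi> (int j - int k) * cnj (h j)))"
      unfolding c by (simp only: sum_distrib_left)
    also have "\<dots> = (\<Sum>j<N. \<Sum>k<K. s k * (fourier_coeff \<phi> (int j - int k) * cnj (h j)))"
      by (rule sum.swap)
    also have "\<dots> = (\<Sum>m<N. \<Sum>k<K. fourier_coeff \<phi> (int m - int k) * s k * cnj (h m))"
      by (simp only: mult_ac)
    finally show ?thesis ..
  qed
  also have "\<dots> = of_real Y" unfolding Y_def by (simp only: of_real_sum cnorm_sq)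
  finally have e: "(\<Sum>m<N. \<Sum>k<K. fourier_coeff \<phi> (int m - int k) * s k * cnj (h m)) = of_real Y" .
  have "Y \<le> M / 2 * ((1 / M) * Y + (1 / (1 / M)) * H)"
    using toep_bilin[OF phi M, where l="1/M" and K=N and N=K and f=s and g=h] M1 Y0
    unfolding e H_def[symmetric] Y_def[symmetric] by simp
  hence "Y \<le> (Y + M\<^sup>2 * H) / 2" using M1 by (simp add: field_simps power2_eq_square)
  thus "(\<Sum>i<K. (cmod (\<Sum>j<N. sm \<phi> i j * h j))\<^sup>2) \<le> M\<^sup>2 * (\<Sum>j<N. (cmod (h j))\<^sup>2)"
    unfolding Y_def[symmetric, unfolded s_def] H_def[symmetric] by simp
qed

lemma u_pair_summable:
  assumes a: "norm \<alpha> < 1" "\<alpha> \<noteq> 0"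
  shows "summable (\<lambda>j. u_coeff \<alpha> i j * cnj (u_coeff \<alpha> k j))"
proof -
  have "summable (\<lambda>j. norm (u_coeff \<alpha> i j * cnj (u_coeff \<alpha> k j)))"
    by (rule summable_comparison_test[OF _ summable_mult2[OF u_row1[OF a, of i], of "\<Sum>j. norm (u_coeff \<alpha> k j)"]])
      (auto simp: norm_mult intro!: mult_left_mono term_le_suminf[OF u_row1[OF a]])
  thus ?thesis by (rule summable_norm_cancel)
qed

lemma fbound_wm:
  assumes a: "norm \<alpha> < 1" "\<alpha> \<noteq> 0"
  shows "fbound (wm \<alpha>) 1"
proof
  show "(0::real) \<le> 1" by simp
  fix h :: "nat \<Rightarrow> complex" and N K
  define w where "w j = (\<Sum>i<N. wm \<alpha> j i * h i)" for j
  have e: "complex_of_real ((cmod (w j))\<^sup>2) = (\<Sum>i<N. \<Sum>i'<N. (h i * cnj (h i')) * (u_coeff \<alpha> i j * cnj (u_coeff \<alpha> i' j)))" for j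
    unfolding cnorm_sq w_def wm_def by (simp add: sum_product cnj_sum mult_ac)
  have se: "(\<lambda>j. complex_of_real ((cmod (w j))\<^sup>2)) sums (\<Sum>i<N. \<Sum>i'<N. (h i * cnj (h i')) * (if i = i' then 1 else 0))"
    unfolding e
    by (intro sums_sum sums_mult) (subst u_orth[OF a, symmetric], rule summable_sums[OF u_pair_summable[OF a]])
  also have "(\<Sum>i<N. \<Sum>i'<N. (h i * cnj (h i')) * (if i = i' then 1 else 0)) = complex_of_real (\<Sum>i<N. (cmod (h i))\<^sup>2)"
    by (simp add: if_distrib sum.delta cong: if_cong) (simp add: complex_norm_square[symmetric])
  finally have "(\<lambda>j. (cmod (w j))\<^sup>2) sums (\<Sum>i<N. (cmod (h i))\<^sup>2)"
    by (simp only: sums_of_real_iff)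
  hence "(\<Sum>j<K. (cmod (w j))\<^sup>2) \<le> (\<Sum>i<N. (cmod (h i))\<^sup>2)"
    using sum_le_suminf[of "\<lambda>j. (cmod (w j))\<^sup>2" "{..<K}"] by (auto simp: sums_iff)
  thus "(\<Sum>i<K. (cmod (\<Sum>j<N. wm \<alpha> i j * h j))\<^sup>2) \<le> 1 * (\<Sum>j<N. (cmod (h j))\<^sup>2)"
    unfolding w_def by simp
qed

definition ev :: "nat \<Rightarrow> nat \<Rightarrow> complex" where
  "ev n = (\<lambda>k. if k = n then 1 else 0)"

lemma suminf_ev_right: "(\<Sum>k. x k * ev n k) = x n"
proof -
  have "(\<lambda>k. x k * ev n k) sums (\<Sum>k\<in>{n}. x k * ev n k)"
    by (rule sums_finite) (auto simp: ev_def)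
  thus ?thesis by (simp add: sums_iff ev_def)
qed

lemma suminf_ev_left: "(\<Sum>k. ev n k * x k) = x n"
  using suminf_ev_right[of x n] by (simp add: mult.commute)

lemma ev_H2: "ev n \<in> H2"
  unfolding H2_iff ev_def by (rule summable_finite[of "{n}"]) auto

lemma l1_H2:
  assumes "summable (\<lambda>n. norm (x n))"
  shows "x \<in> H2"
proof -
  have "(\<lambda>n. norm (x n)) \<longlonglongrightarrow> 0" by (rule summable_LIMSEQ_zero[OF assms])
  hence "eventually (\<lambda>n. norm (x n) < 1) sequentially"
    by (rule order_tendstoD) simp
  then obtain N where N: "\<And>n. n \<ge> N \<Longrightarrow> norm (x n) < 1" by (auto simp: eventually_sequentially)
  show ?thesis unfolding H2_iff
  proof (rule summable_comparison_test[OF _ assms])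
    show "\<exists>N. \<forall>n\<ge>N. norm ((cmod (x n))\<^sup>2) \<le> norm (x n)"
    proof (intro exI[of _ N] allI impI)
      fix n assume "n \<ge> N"
      hence "norm (x n) < 1" by (rule N)
      hence "norm (x n) * norm (x n) \<le> norm (x n) * 1" by (intro mult_left_mono) auto
      thus "norm ((cmod (x n))\<^sup>2) \<le> norm (x n)" by (simp add: power2_eq_square)
    qed
  qed
qed

lemma h2_inner_ev: "h2_inner (ev i) y = cnj (y i)"
  unfolding h2_inner_def by (rule suminf_ev_left)

lemma toeplitz_ev: "toeplitz \<phi> (ev n) = (\<lambda>m. fourier_coeff \<phi> (int m - int n))"
  unfolding toeplitz_def by (simp add: suminf_ev_right)

lemma J_ev: "J_H2 (ev n) = ev n"
  unfolding J_H2_def ev_def by auto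

lemma C_formula:
  assumes a: "norm \<alpha> < 1" "\<alpha> \<noteq> 0" and x: "x \<in> H2"
  shows "C_op \<alpha> x = (\<lambda>j. \<Sum>i. cnj (x i) * u_coeff \<alpha> i j)"
proof -
  obtain B where B: "\<And>n. cmod (x n) \<le> B" using H2_bounded[OF x] by blast
  have "W_op \<alpha> (J_H2 x) = (\<lambda>j. \<Sum>i. J_H2 x i * u_coeff \<alpha> i j)"
    by (rule W_formula[OF a]) (use B in \<open>simp add: J_H2_def\<close>)
  thus ?thesis unfolding C_op_def by (simp add: J_H2_def)
qed

lemma C_ev:
  assumes a: "norm \<alpha> < 1" "\<alpha> \<noteq> 0"
  shows "C_op \<alpha> (ev n) = (\<lambda>j. u_coeff \<alpha> n j)"
proof -
  have "cnj (ev n i) = ev n i" for i by (simp add: ev_def)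
  thus ?thesis unfolding C_formula[OF a ev_H2] by (simp add: suminf_ev_left)
qed

lemma C_mop:
  assumes a: "norm \<alpha> < 1" "\<alpha> \<noteq> 0" and x: "x \<in> H2"
  shows "C_op \<alpha> x = mop (wm \<alpha>) (\<lambda>i. cnj (x i))"
  unfolding C_formula[OF a x] mop_def wm_def by (simp add: mult.commute)

lemma KEY:
  fixes c :: "int \<Rightarrow> complex"
  assumes a: "norm \<alpha> < 1" "\<alpha> \<noteq> 0" and cM: "\<And>n. cmod (c n) \<le> M"
  shows "(\<Sum>i. (\<Sum>k. c (int k - int i) * cnj (u_coeff \<alpha> n k)) * u_coeff \<alpha> i m) =
         (\<Sum>i. \<Sum>j. u_coeff \<alpha> m j * c (int i - int j) * cnj (u_coeff \<alpha> i n))"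
proof -
  define f where "f j i = u_coeff \<alpha> m j * c (int i - int j) * cnj (u_coeff \<alpha> i n)" for j i
  define Cn where "Cn = (\<Sum>i. norm (u_coeff \<alpha> i n))"
  have M0: "M \<ge> 0" using cM[of 0] norm_ge_zero[of "c 0"] by linarith
  have col: "summable (\<lambda>i. norm (u_coeff \<alpha> i n))" by (rule u_col1[OF a])
  have fle: "norm (f j i) \<le> (norm (u_coeff \<alpha> m j) * M) * norm (u_coeff \<alpha> i n)" for j i
    unfolding f_def norm_mult complex_mod_cnj by (intro mult_right_mono mult_left_mono cM) auto
  have row: "summable (\<lambda>i. norm (f j i))" for j
    by (rule summable_comparison_test[OF _ summable_mult[OF col, of "norm (u_coeff \<alpha> m j) * M"]]) (use fle in auto)
  have rowle: "(\<Sum>i. norm (f j i)) \<le> norm (u_coeff \<alpha> m j) * M * Cn" for j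
    unfolding Cn_def using suminf_le[OF fle row summable_mult[OF col]] suminf_mult[OF col] by simp
  have tot: "summable (\<lambda>j. \<Sum>i. norm (f j i))"
    by (rule summable_comparison_test[OF _ summable_mult2[OF summable_mult2[OF u_row1[OF a, of m], of M], of Cn]])
      (use rowle suminf_nonneg[OF row] in auto)
  have "(\<Sum>i. (\<Sum>k. c (int k - int i) * cnj (u_coeff \<alpha> n k)) * u_coeff \<alpha> i m) = (\<Sum>j. \<Sum>i. f j i)"
  proof -
    have "(\<Sum>k. c (int k - int j) * cnj (u_coeff \<alpha> n k)) * u_coeff \<alpha> j m = (\<Sum>i. f j i)" for j
    proof -
      have s: "summable (\<lambda>i. c (int i - int j) * cnj (u_coeff \<alpha> i n))"
      proof -
        have "summable (\<lambda>i. f j i)" using row[of j] by (rule summable_norm_cancel)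
        show ?thesis
          by (rule summable_norm_cancel, rule summable_comparison_test[OF _ summable_mult[OF col, of M]])
            (auto simp: norm_mult intro!: mult_right_mono cM)
      qed
      have "(\<Sum>k. c (int k - int j) * cnj (u_coeff \<alpha> n k)) * u_coeff \<alpha> j m =
            (\<Sum>i. c (int i - int j) * cnj (u_coeff \<alpha> i n)) * u_coeff \<alpha> m j"
        by (simp add: u_sym[of \<alpha> n] u_sym[of \<alpha> j m])
      also have "\<dots> = (\<Sum>i. c (int i - int j) * cnj (u_coeff \<alpha> i n) * u_coeff \<alpha> m j)"
        by (rule suminf_mult2[OF s])
      also have "\<dots> = (\<Sum>i. f j i)" by (simp add: f_def mult_ac)
      finally show ?thesis .
    qed
    thus ?thesis by simp
  qed
  also have "\<dots> = (\<Sum>i. \<Sum>j. f j i)" by (rule fubini_nat(1)[OF row tot])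
  finally show ?thesis by (simp add: f_def)
qed

lemma u_H2: "norm \<alpha> < 1 \<Longrightarrow> \<alpha> \<noteq> 0 \<Longrightarrow> (\<lambda>j. u_coeff \<alpha> n j) \<in> H2"
  by (rule l1_H2[OF u_row1])

lemma forward:
  assumes a: "norm \<alpha> < 1" "\<alpha> \<noteq> 0" and cM: "\<And>n. cmod (fourier_coeff \<phi> n) \<le> M"
    and adj: "is_adjoint (toeplitz \<phi>) S" and CS: "\<forall>f\<in>H2. C_op \<alpha> (S (C_op \<alpha> f)) = toeplitz \<phi> f"
  shows "fourier_coeff \<phi> (int m - int n) =
       (\<Sum>i. \<Sum>j. u_coeff \<alpha> m j * fourier_coeff \<phi> (int i - int j) * cnj (u_coeff \<alpha> i n))"
proof -
  define g where "g = (\<lambda>j. u_coeff \<alpha> n j)"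
  have gH: "g \<in> H2" unfolding g_def by (rule u_H2[OF a])
  have Cg: "C_op \<alpha> (ev n) = g" unfolding g_def by (rule C_ev[OF a])
  have SgH: "S g \<in> H2" using adj gH unfolding is_adjoint_def by blast
  have Sg: "cnj (S g i) = (\<Sum>k. fourier_coeff \<phi> (int k - int i) * cnj (u_coeff \<alpha> n k))" for i
  proof -
    have "cnj (S g i) = h2_inner (ev i) (S g)" by (simp add: h2_inner_ev)
    also have "\<dots> = h2_inner (toeplitz \<phi> (ev i)) g"
      using adj ev_H2 gH unfolding is_adjoint_def by metis
    also have "\<dots> = (\<Sum>k. fourier_coeff \<phi> (int k - int i) * cnj (u_coeff \<alpha> n k))"
      unfolding h2_inner_def toeplitz_ev g_def ..
    finally show ?thesis .
  qed
  have "fourier_coeff \<phi> (int m - int n) = toeplitz \<phi> (ev n) m" by (simp add: toeplitz_ev)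
  also have "\<dots> = C_op \<alpha> (S (C_op \<alpha> (ev n))) m" using CS ev_H2 by metis
  also have "\<dots> = (\<Sum>i. cnj (S g i) * u_coeff \<alpha> i m)" unfolding Cg C_formula[OF a SgH] ..
  also have "\<dots> = (\<Sum>i. (\<Sum>k. fourier_coeff \<phi> (int k - int i) * cnj (u_coeff \<alpha> n k)) * u_coeff \<alpha> i m)"
    unfolding Sg ..
  also have "\<dots> = (\<Sum>i. \<Sum>j. u_coeff \<alpha> m j * fourier_coeff \<phi> (int i - int j) * cnj (u_coeff \<alpha> i n))"
    by (rule KEY[OF a cM])
  finally show ?thesis .
qed

lemma mop_trunc: "mop a (trunc N h) = (\<lambda>i. \<Sum>j<N. a i j * h j)"
proof
  fix i
  have "(\<lambda>j. a i j * trunc N h j) sums (\<Sum>j<N. a i j * trunc N h j)"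
    by (rule sums_finite) (auto simp: trunc_def)
  thus "mop a (trunc N h) i = (\<Sum>j<N. a i j * h j)"
    unfolding mop_def by (simp add: sums_iff trunc_def)
qed

lemma suminf_cnj':
  assumes "summable f" shows "cnj (suminf f) = (\<Sum>n. cnj (f n))"
proof -
  have "(\<lambda>n. cnj (f n)) sums cnj (suminf f)" using summable_sums[OF assms] by (simp only: sums_cnj)
  thus ?thesis by (simp add: sums_iff)
qed

lemma sq_conv:
  fixes x :: "nat \<Rightarrow> complex"
  assumes le: "\<And>N. (cmod (x N - L))\<^sup>2 \<le> d N" and d: "d \<longlonglongrightarrow> 0"
  shows "x \<longlonglongrightarrow> L"
proof -
  have "(\<lambda>N. sqrt (d N)) \<longlonglongrightarrow> sqrt 0" by (intro tendsto_intros d)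
  hence sd: "(\<lambda>N. sqrt (d N)) \<longlonglongrightarrow> 0" by simp
  have "cmod (x N - L) \<le> sqrt (d N)" for N using le[of N] real_le_rsqrt by blast
  hence "(\<lambda>N. cmod (x N - L)) \<longlonglongrightarrow> 0"
    by (intro tendsto_sandwich[OF _ _ tendsto_const sd] always_eventually allI) auto
  thus ?thesis by (simp add: tendsto_norm_zero_iff LIM_zero_iff)
qed

lemma inner_diff_left:
  assumes "x \<in> H2" "y \<in> H2" "g \<in> H2"
  shows "h2_inner (\<lambda>n. x n - y n) g = h2_inner x g - h2_inner y g"
  unfolding h2_inner_def using suminf_diff[OF inner_summable[OF assms(1,3)] inner_summable[OF assms(2,3)]]
  by (simp add: algebra_simps)

context
  fixes \<alpha> :: complex and \<phi> :: "complex \<Rightarrow> complex" and M :: real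
  assumes a: "norm \<alpha> < 1" "\<alpha> \<noteq> 0" and phi: "L_infty_circle \<phi>"
    and M: "AE t in lborel. t \<in> {0..2*pi} \<longrightarrow> cmod (\<phi> (cis t)) \<le> M" and M1: "M \<ge> 1"
begin

interpretation T: fbound "tm \<phi>" "M\<^sup>2" by (rule fbound_tm[OF phi M M1])
interpretation Sf: fbound "sm \<phi>" "M\<^sup>2" by (rule fbound_sm[OF phi M M1])
interpretation W: fbound "wm \<alpha>" 1 by (rule fbound_wm[OF a])

lemma cM: "cmod (fourier_coeff \<phi> n) \<le> M" by (rule fourier_bound[OF phi M])

lemma tm_col_H2: "(\<lambda>m. tm \<phi> m k) \<in> H2"
proof -
  have "(\<lambda>m. cnj (sm \<phi> k m)) \<in> H2" by (rule H2_cnj[OF Sf.row_H2])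
  thus ?thesis by (simp add: sm_def tm_def)
qed

lemma fin_adj:
  assumes g: "g \<in> H2"
  shows "h2_inner (mop (tm \<phi>) (trunc N f)) g = (\<Sum>k<N. f k * cnj (mop (sm \<phi>) g k))"
proof -
  have s: "summable (\<lambda>m. tm \<phi> m k * cnj (g m))" for k by (rule inner_summable[OF tm_col_H2 g])
  have c: "cnj (mop (sm \<phi>) g k) = (\<Sum>m. tm \<phi> m k * cnj (g m))" for k
  proof -
    have "summable (\<lambda>m. sm \<phi> k m * g m)" by (rule Sf.row_summable[OF g])
    hence "cnj (mop (sm \<phi>) g k) = (\<Sum>m. cnj (sm \<phi> k m * g m))" unfolding mop_def by (rule suminf_cnj')
    thus ?thesis by (simp add: sm_def tm_def)
  qed
  have "h2_inner (mop (tm \<phi>) (trunc N f)) g = (\<Sum>m. \<Sum>k<N. f k * (tm \<phi> m k * cnj (g m)))"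
    unfolding h2_inner_def mop_trunc by (simp add: sum_distrib_left sum_distrib_right mult_ac)
  also have "\<dots> = (\<Sum>k<N. \<Sum>m. f k * (tm \<phi> m k * cnj (g m)))"
    by (rule suminf_sum) (intro summable_mult s)
  also have "\<dots> = (\<Sum>k<N. f k * cnj (mop (sm \<phi>) g k))"
    unfolding c by (simp add: suminf_mult[OF s])
  finally show ?thesis .
qed

lemma adj:
  assumes f: "f \<in> H2" and g: "g \<in> H2"
  shows "h2_inner (toeplitz \<phi> f) g = h2_inner f (mop (sm \<phi>) g)"
proof -
  have SgH: "mop (sm \<phi>) g \<in> H2" by (rule Sf.mop_bound(1)[OF g])
  have TfH: "mop (tm \<phi>) f \<in> H2" by (rule T.mop_bound(1)[OF f])
  have TfNH: "mop (tm \<phi>) (trunc N f) \<in> H2" for N by (rule T.mop_bound(1)[OF H2_trunc])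
  have l1: "(\<lambda>N. h2_inner (mop (tm \<phi>) (trunc N f)) g) \<longlonglongrightarrow> h2_inner (mop (tm \<phi>) f) g"
  proof (rule sq_conv)
    fix N
    have "(cmod (h2_inner (mop (tm \<phi>) (trunc N f)) g - h2_inner (mop (tm \<phi>) f) g))\<^sup>2 =
          (cmod (h2_inner (\<lambda>i. mop (tm \<phi>) f i - mop (tm \<phi>) (trunc N f) i) g))\<^sup>2"
      unfolding inner_diff_left[OF TfH TfNH g] by (simp add: norm_minus_commute)
    also have "\<dots> \<le> nrm2 (\<lambda>i. mop (tm \<phi>) f i - mop (tm \<phi>) (trunc N f) i) * nrm2 g"
      by (rule inner_bound[OF H2_diff[OF TfH TfNH] g])
    finally show "(cmod (h2_inner (mop (tm \<phi>) (trunc N f)) g - h2_inner (mop (tm \<phi>) f) g))\<^sup>2 \<le>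
        nrm2 (\<lambda>i. mop (tm \<phi>) f i - mop (tm \<phi>) (trunc N f) i) * nrm2 g" .
  next
    have "(\<lambda>N. nrm2 (\<lambda>i. mop (tm \<phi>) f i - mop (tm \<phi>) (trunc N f) i) * nrm2 g) \<longlonglongrightarrow> 0 * nrm2 g"
      by (intro tendsto_mult tendsto_const T.mop_cont f)
    thus "(\<lambda>N. nrm2 (\<lambda>i. mop (tm \<phi>) f i - mop (tm \<phi>) (trunc N f) i) * nrm2 g) \<longlonglongrightarrow> 0" by simp
  qed
  have l2: "(\<lambda>N. (\<Sum>k<N. f k * cnj (mop (sm \<phi>) g k))) \<longlonglongrightarrow> h2_inner f (mop (sm \<phi>) g)"
    unfolding h2_inner_def by (rule summable_LIMSEQ[OF inner_summable[OF f SgH]])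
  have "h2_inner (mop (tm \<phi>) f) g = h2_inner f (mop (sm \<phi>) g)"
    using LIMSEQ_unique[OF l1 l2[folded fin_adj[OF g]]] .
  thus ?thesis by (simp add: toeplitz_mop)
qed

lemma is_adj: "is_adjoint (toeplitz \<phi>) (mop (sm \<phi>))"
  unfolding is_adjoint_def using Sf.mop_bound(1) adj by blast

end

lemma nrm2_cnj: "nrm2 (\<lambda>i. cnj (x i)) = nrm2 x"
  by (simp add: nrm2_def)

lemma trunc_cnj: "(\<lambda>i. cnj (trunc N x i)) = trunc N (\<lambda>i. cnj (x i))"
  by (auto simp: trunc_def)

context
  fixes \<alpha> :: complex and \<phi> :: "complex \<Rightarrow> complex" and M :: real
  assumes a: "norm \<alpha> < 1" "\<alpha> \<noteq> 0" and phi: "L_infty_circle \<phi>"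
    and M: "AE t in lborel. t \<in> {0..2*pi} \<longrightarrow> cmod (\<phi> (cis t)) \<le> M" and M1: "M \<ge> 1"
begin

interpretation T: fbound "tm \<phi>" "M\<^sup>2" by (rule fbound_tm[OF phi M M1])
interpretation Sf: fbound "sm \<phi>" "M\<^sup>2" by (rule fbound_sm[OF phi M M1])
interpretation W: fbound "wm \<alpha>" 1 by (rule fbound_wm[OF a])

lemma cM': "cmod (fourier_coeff \<phi> n) \<le> M" by (rule fourier_bound[OF phi M])

lemma ucol_H2: "(\<lambda>i. u_coeff \<alpha> i m) \<in> H2"
  using u_H2[OF a, of m] by (simp add: u_sym[of \<alpha> _ m])

lemma mop_wm_bound:
  assumes y: "y \<in> H2"
  shows "(cmod (mop (wm \<alpha>) y m))\<^sup>2 \<le> nrm2 y * nrm2 (\<lambda>i. u_coeff \<alpha> i m)"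
proof -
  have "mop (wm \<alpha>) y m = h2_inner y (\<lambda>i. cnj (u_coeff \<alpha> i m))"
    unfolding mop_def wm_def h2_inner_def by (simp add: mult.commute)
  also have "(cmod \<dots>)\<^sup>2 \<le> nrm2 y * nrm2 (\<lambda>i. cnj (u_coeff \<alpha> i m))"
    by (rule inner_bound[OF y H2_cnj[OF ucol_H2]])
  finally show ?thesis by (simp add: nrm2_cnj)
qed

definition LL :: "nat \<Rightarrow> (nat \<Rightarrow> complex) \<Rightarrow> complex" where
  "LL m x = mop (wm \<alpha>) (\<lambda>i. cnj (mop (sm \<phi>) (mop (wm \<alpha>) (\<lambda>i. cnj (x i))) i)) m"

lemma LL_cont:
  assumes x: "x \<in> H2"
  shows "(cmod (LL m x - LL m (trunc N x)))\<^sup>2 \<le> nrm2 (\<lambda>i. u_coeff \<alpha> i m) * M\<^sup>2 * nrm2 (\<lambda>n. x n - trunc N x n)"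
proof -
  define xN where "xN = trunc N x"
  have xNH: "xN \<in> H2" unfolding xN_def by (rule H2_trunc)
  have cx: "(\<lambda>i. cnj (x i)) \<in> H2" by (rule H2_cnj[OF x])
  have cxN: "(\<lambda>i. cnj (xN i)) \<in> H2" by (rule H2_cnj[OF xNH])
  define G1 where "G1 = mop (wm \<alpha>) (\<lambda>i. cnj (x i))"
  define G2 where "G2 = mop (wm \<alpha>) (\<lambda>i. cnj (xN i))"
  have G1H: "G1 \<in> H2" unfolding G1_def by (rule W.mop_bound(1)[OF cx])
  have G2H: "G2 \<in> H2" unfolding G2_def by (rule W.mop_bound(1)[OF cxN])
  define S1 where "S1 = mop (sm \<phi>) G1"
  define S2 where "S2 = mop (sm \<phi>) G2"
  have S1H: "S1 \<in> H2" unfolding S1_def by (rule Sf.mop_bound(1)[OF G1H])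
  have S2H: "S2 \<in> H2" unfolding S2_def by (rule Sf.mop_bound(1)[OF G2H])
  define d where "d = (\<lambda>n. x n - xN n)"
  have dH: "d \<in> H2" unfolding d_def by (rule H2_diff[OF x xNH])
  have Gd: "(\<lambda>j. G1 j - G2 j) = mop (wm \<alpha>) (\<lambda>i. cnj (d i))"
    unfolding G1_def G2_def d_def using W.mop_diff[OF cx cxN] by simp
  have Sd: "(\<lambda>j. S1 j - S2 j) = mop (sm \<phi>) (\<lambda>j. G1 j - G2 j)"
    unfolding S1_def S2_def using Sf.mop_diff[OF G1H G2H] by simp
  have L1: "LL m x = mop (wm \<alpha>) (\<lambda>i. cnj (S1 i)) m" by (simp only: LL_def S1_def G1_def)
  have L2: "LL m xN = mop (wm \<alpha>) (\<lambda>i. cnj (S2 i)) m" by (simp only: LL_def S2_def G2_def)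
  have cd: "(\<lambda>i. cnj (S1 i - S2 i)) = (\<lambda>i. cnj (S1 i) - cnj (S2 i))" by simp
  have Ld: "LL m x - LL m xN = mop (wm \<alpha>) (\<lambda>i. cnj (S1 i - S2 i)) m"
    unfolding L1 L2 cd using fun_cong[OF W.mop_diff[OF H2_cnj[OF S1H] H2_cnj[OF S2H]], of m] by simp
  have SdH: "(\<lambda>j. S1 j - S2 j) \<in> H2" by (rule H2_diff[OF S1H S2H])
  have GdH: "(\<lambda>j. G1 j - G2 j) \<in> H2" by (rule H2_diff[OF G1H G2H])
  have A: "(cmod (LL m x - LL m xN))\<^sup>2 \<le> nrm2 (\<lambda>j. S1 j - S2 j) * nrm2 (\<lambda>i. u_coeff \<alpha> i m)"
  proof -
    have e: "nrm2 (\<lambda>i. cnj (S1 i - S2 i)) = nrm2 (\<lambda>j. S1 j - S2 j)" by (rule nrm2_cnj)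
    show ?thesis unfolding Ld e[symmetric] by (rule mop_wm_bound[OF H2_cnj[OF SdH]])
  qed
  have B: "nrm2 (\<lambda>j. S1 j - S2 j) \<le> M\<^sup>2 * nrm2 (\<lambda>j. G1 j - G2 j)" unfolding Sd by (rule Sf.mop_bound(2)[OF GdH])
  have C: "nrm2 (\<lambda>j. G1 j - G2 j) \<le> nrm2 d" unfolding Gd using W.mop_bound(2)[OF H2_cnj[OF dH]] by (simp add: nrm2_cnj)
  have U0: "nrm2 (\<lambda>i. u_coeff \<alpha> i m) \<ge> 0" by (rule nrm2_nonneg[OF ucol_H2])
  have "nrm2 (\<lambda>j. S1 j - S2 j) \<le> M\<^sup>2 * nrm2 d"
    by (rule order_trans[OF B mult_left_mono[OF C]]) simp
  hence "nrm2 (\<lambda>j. S1 j - S2 j) * nrm2 (\<lambda>i. u_coeff \<alpha> i m) \<le> M\<^sup>2 * nrm2 d * nrm2 (\<lambda>i. u_coeff \<alpha> i m)"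
    by (rule mult_right_mono[OF _ U0])
  hence "(cmod (LL m x - LL m xN))\<^sup>2 \<le> M\<^sup>2 * nrm2 d * nrm2 (\<lambda>i. u_coeff \<alpha> i m)"
    using A by linarith
  thus ?thesis unfolding d_def xN_def by (simp add: mult_ac nrm2_cnj)
qed

lemma LL_trunc:
  "LL m (trunc N x) = (\<Sum>k<N. x k * (\<Sum>i. (\<Sum>j. fourier_coeff \<phi> (int j - int i) * cnj (u_coeff \<alpha> k j)) * u_coeff \<alpha> i m))"
proof -
  define A where "A k i = (\<Sum>j. fourier_coeff \<phi> (int j - int i) * cnj (u_coeff \<alpha> k j))" for k i
  define Bk where "Bk k = M * (\<Sum>j. norm (u_coeff \<alpha> k j))" for k
  have sA: "summable (\<lambda>j. sm \<phi> i j * u_coeff \<alpha> k j)" for i k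
  proof -
    have "summable (\<lambda>j. norm (sm \<phi> i j * u_coeff \<alpha> k j))"
      by (rule summable_comparison_test[OF _ summable_mult[OF u_row1[OF a, of k], of M]])
        (auto simp: norm_mult sm_def intro!: mult_right_mono cM')
    thus ?thesis by (rule summable_norm_cancel)
  qed
  have Ab: "norm (A k i) \<le> Bk k" for k i
  proof -
    have sn: "summable (\<lambda>j. norm (fourier_coeff \<phi> (int j - int i) * cnj (u_coeff \<alpha> k j)))"
      by (rule summable_comparison_test[OF _ summable_mult[OF u_row1[OF a, of k], of M]])
        (auto simp: norm_mult intro!: mult_right_mono cM')
    have "norm (A k i) \<le> (\<Sum>j. norm (fourier_coeff \<phi> (int j - int i) * cnj (u_coeff \<alpha> k j)))"
      unfolding A_def by (rule summable_norm[OF sn])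
    also have "\<dots> \<le> (\<Sum>j. M * norm (u_coeff \<alpha> k j))"
      by (rule suminf_le[OF _ sn summable_mult[OF u_row1[OF a, of k]]]) (auto simp: norm_mult intro!: mult_right_mono cM')
    also have "\<dots> = Bk k" unfolding Bk_def by (rule suminf_mult[OF u_row1[OF a, of k]])
    finally show ?thesis .
  qed
  have G: "mop (wm \<alpha>) (\<lambda>i. cnj (trunc N x i)) = (\<lambda>j. \<Sum>k<N. u_coeff \<alpha> k j * cnj (x k))"
    unfolding trunc_cnj mop_trunc wm_def ..
  have S: "cnj (mop (sm \<phi>) (mop (wm \<alpha>) (\<lambda>i. cnj (trunc N x i))) i) = (\<Sum>k<N. x k * A k i)" for i
  proof -
    have "mop (sm \<phi>) (mop (wm \<alpha>) (\<lambda>i. cnj (trunc N x i))) i = (\<Sum>j. \<Sum>k<N. cnj (x k) * (sm \<phi> i j * u_coeff \<alpha> k j))"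
      unfolding G by (simp add: mop_def sum_distrib_left mult_ac)
    also have "\<dots> = (\<Sum>k<N. \<Sum>j. cnj (x k) * (sm \<phi> i j * u_coeff \<alpha> k j))"
      by (rule suminf_sum) (intro summable_mult sA)
    also have "\<dots> = (\<Sum>k<N. cnj (x k) * (\<Sum>j. sm \<phi> i j * u_coeff \<alpha> k j))"
      by (simp add: suminf_mult[OF sA])
    finally have "cnj (mop (sm \<phi>) (mop (wm \<alpha>) (\<lambda>i. cnj (trunc N x i))) i) = (\<Sum>k<N. x k * cnj (\<Sum>j. sm \<phi> i j * u_coeff \<alpha> k j))"
      by (simp add: cnj_sum)
    also have "\<dots> = (\<Sum>k<N. x k * A k i)"
      unfolding A_def using suminf_cnj'[OF sA] by (simp add: sm_def)
    finally show ?thesis .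
  qed
  have sB: "summable (\<lambda>i. A k i * u_coeff \<alpha> i m)" for k
  proof -
    have "summable (\<lambda>i. norm (A k i * u_coeff \<alpha> i m))"
      by (rule summable_comparison_test[OF _ summable_mult[OF u_col1[OF a, of m], of "Bk k"]])
        (auto simp: norm_mult intro!: mult_right_mono Ab)
    thus ?thesis by (rule summable_norm_cancel)
  qed
  have "LL m (trunc N x) = (\<Sum>i. u_coeff \<alpha> i m * (\<Sum>k<N. x k * A k i))"
    unfolding LL_def S unfolding mop_def wm_def ..
  also have "\<dots> = (\<Sum>i. \<Sum>k<N. x k * (A k i * u_coeff \<alpha> i m))"
    by (simp add: sum_distrib_left mult_ac)
  also have "\<dots> = (\<Sum>k<N. \<Sum>i. x k * (A k i * u_coeff \<alpha> i m))"
    by (rule suminf_sum) (intro summable_mult sB)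
  also have "\<dots> = (\<Sum>k<N. x k * (\<Sum>i. A k i * u_coeff \<alpha> i m))"
    by (simp add: suminf_mult[OF sB])
  finally show ?thesis unfolding A_def .
qed

lemma backward_CSC:
  assumes hyp: "\<forall>m n :: nat. fourier_coeff \<phi> (int m - int n) =
       (\<Sum>i. \<Sum>j. u_coeff \<alpha> m j * fourier_coeff \<phi> (int i - int j) * cnj (u_coeff \<alpha> i n))"
    and f: "f \<in> H2"
  shows "C_op \<alpha> (mop (sm \<phi>) (C_op \<alpha> f)) = toeplitz \<phi> f"
proof
  fix m
  have cf: "(\<lambda>i. cnj (f i)) \<in> H2" by (rule H2_cnj[OF f])
  have CfH: "C_op \<alpha> f \<in> H2" unfolding C_mop[OF a f] by (rule W.mop_bound(1)[OF cf])
  have SH: "mop (sm \<phi>) (C_op \<alpha> f) \<in> H2" by (rule Sf.mop_bound(1)[OF CfH])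
  have lhs: "C_op \<alpha> (mop (sm \<phi>) (C_op \<alpha> f)) m = LL m f"
    unfolding C_mop[OF a SH] unfolding C_mop[OF a f] LL_def ..
  have fin: "LL m (trunc N f) = (\<Sum>k<N. f k * fourier_coeff \<phi> (int m - int k))" for N
  proof -
    have "(\<Sum>i. (\<Sum>j. fourier_coeff \<phi> (int j - int i) * cnj (u_coeff \<alpha> k j)) * u_coeff \<alpha> i m) =
          fourier_coeff \<phi> (int m - int k)" for k
      using KEY[where c="fourier_coeff \<phi>" and M=M and n=k and m=m, OF a cM'] hyp[rule_format, of m k]
      by (simp only:)
    thus ?thesis unfolding LL_trunc by simp
  qed
  have l1: "(\<lambda>N. LL m (trunc N f)) \<longlonglongrightarrow> LL m f"
  proof (rule sq_conv)
    fix N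
    show "(cmod (LL m (trunc N f) - LL m f))\<^sup>2 \<le> nrm2 (\<lambda>i. u_coeff \<alpha> i m) * M\<^sup>2 * nrm2 (\<lambda>n. f n - trunc N f n)"
      using LL_cont[OF f, of m N] by (simp add: norm_minus_commute)
  next
    have "(\<lambda>N. nrm2 (\<lambda>i. u_coeff \<alpha> i m) * M\<^sup>2 * nrm2 (\<lambda>n. f n - trunc N f n)) \<longlonglongrightarrow>
        nrm2 (\<lambda>i. u_coeff \<alpha> i m) * M\<^sup>2 * 0"
      by (intro tendsto_mult tendsto_const trunc_tail f)
    thus "(\<lambda>N. nrm2 (\<lambda>i. u_coeff \<alpha> i m) * M\<^sup>2 * nrm2 (\<lambda>n. f n - trunc N f n)) \<longlonglongrightarrow> 0" by simp
  qed
  have l2: "(\<lambda>N. \<Sum>k<N. f k * fourier_coeff \<phi> (int m - int k)) \<longlonglongrightarrow> toeplitz \<phi> f m"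
  proof -
    have "summable (\<lambda>k. tm \<phi> m k * f k)" by (rule T.row_summable[OF f])
    hence "(\<lambda>N. \<Sum>k<N. tm \<phi> m k * f k) \<longlonglongrightarrow> (\<Sum>k. tm \<phi> m k * f k)" by (rule summable_LIMSEQ)
    thus ?thesis unfolding toeplitz_def tm_def by (simp add: mult.commute)
  qed
  show "C_op \<alpha> (mop (sm \<phi>) (C_op \<alpha> f)) m = toeplitz \<phi> f m"
    unfolding lhs using LIMSEQ_unique[OF l1[unfolded fin] l2] .
qed

end

theorem proposition8p3:
  fixes \<alpha> :: complex and \<phi> :: "complex \<Rightarrow> complex"
  assumes "\<alpha> \<in> ball 0 1" and "\<alpha> \<noteq> 0" and "L_infty_circle \<phi>"
  shows "C_symmetric (C_op \<alpha>) (toeplitz \<phi>) \<longleftrightarrow>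
    (\<forall>m n :: nat. fourier_coeff \<phi> (int m - int n) =
       (\<Sum>i. \<Sum>j. u_coeff \<alpha> m j * fourier_coeff \<phi> (int i - int j) * cnj (u_coeff \<alpha> i n)))"
proof -
  have a1: "norm \<alpha> < 1" using assms(1) by simp
  note a2 = assms(2)
  note phi = assms(3)
  obtain M where M1: "M \<ge> 1" and M: "AE t in lborel. t \<in> {0..2*pi} \<longrightarrow> cmod (\<phi> (cis t)) \<le> M"
    using phi_data[OF phi] by blast
  show ?thesis
  proof
    assume "C_symmetric (C_op \<alpha>) (toeplitz \<phi>)"
    then obtain S where adj: "is_adjoint (toeplitz \<phi>) S" and CS: "\<forall>f\<in>H2. C_op \<alpha> (S (C_op \<alpha> f)) = toeplitz \<phi> f"
      unfolding C_symmetric_def by blast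
    show "\<forall>m n :: nat. fourier_coeff \<phi> (int m - int n) =
       (\<Sum>i. \<Sum>j. u_coeff \<alpha> m j * fourier_coeff \<phi> (int i - int j) * cnj (u_coeff \<alpha> i n))"
      using forward[OF a1 a2 fourier_bound[OF phi M] adj CS] by blast
  next
    assume hyp: "\<forall>m n :: nat. fourier_coeff \<phi> (int m - int n) =
       (\<Sum>i. \<Sum>j. u_coeff \<alpha> m j * fourier_coeff \<phi> (int i - int j) * cnj (u_coeff \<alpha> i n))"
    show "C_symmetric (C_op \<alpha>) (toeplitz \<phi>)"
      unfolding C_symmetric_def
      using is_adj[OF a1 a2 phi M M1] backward_CSC[OF a1 a2 phi M M1 hyp] by blast
  qed
qed

end
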